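(* Let $\mathfrak g$ be a finite-dimensional simple complex Lie algebra of classical type and $\mathfrak a\subseteq\mathfrak g$ a semisimple Levi subalgebra whose simple roots are simple roots of $\mathfrak g$. Let $W$ be a finite-dimensional $\mathfrak g\otimes\mathbb C[t]$-module and $w\in W$ a weight vector of weight $\lambda$ (for $\mathfrak h=\mathfrak h\otimes1$) such that $U(\mathfrak n^-\otimes\mathbb C[t]).w=W$. Then $$U(\mathfrak a\otimes\mathbb C[t]).w=\sum_{\mu\in Q^+_{\mathfrak a}}W_{\lambda-\mu},$$ where $W_\nu$ denotes the $\nu$-weight space of $W$.
   Context: $\mathfrak g$ is a finite-dimensional simple complex Lie algebra of classical type with triangular decomposition $\mathfrak g=\mathfrak n^+\oplus\mathfrak h\oplus\mathfrak n^-$, roots $R$, simple roots $\Pi$. A Levi subalgebra is, for $R'\subseteq R$ closed under addition (within $R$) and under $\alpha\mapsto-\alpha$, $\mathfrak a=\sum_{\alpha\in R'}[\mathfrak g_\alpha,\mathfrak g_{-\alpha}]\oplus\bigoplus_{\alpha\in R'}\mathfrak g_\alpha$, with induced triangular decomposition $\mathfrak n^\pm_{\mathfrak a}\subseteq\mathfrak n^\pm$, $\mathfrak h_{\mathfrak a}\subseteq\mathfrak h$, positive roots $R^+_{\mathfrak a}=R'\cap R^+$ and simple roots $\Pi_{\mathfrak a}$; here $\Pi_{\mathfrak a}\subseteq\Pi$ is assumed. $Q^+_{\mathfrak a}$ is the $\mathbb Z_{\ge0}$-span of $R^+_{\mathfrak a}$. The current algebra $\mathfrak g\otimes\mathbb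 C[t]$ has bracket $[x\otimes p,y\otimes q]=[x,y]\otimes pq$. *)

theory Defs
  imports "Jordan_Normal_Form.Matrix"
begin

definition mtrace :: "complex mat \<Rightarrow> complex" where
  "mtrace X = (\<Sum>i<dim_row X. X $$ (i,i))"

definition lie_br :: "complex mat \<Rightarrow> complex mat \<Rightarrow> complex mat" where
  "lie_br X Y = X * Y - Y * X"

definition J_orth :: "nat \<Rightarrow> complex mat" where
  "J_orth N = mat N N (\<lambda>(i,j). if i + j = N - 1 then 1 else 0)"

definition J_symp :: "nat \<Rightarrow> complex mat" where
  "J_symp n = mat (2*n) (2*n) (\<lambda>(i,j). if i + j = 2*n - 1 then (if i < n then 1 else -1) else 0)"

definition sl_alg :: "nat \<Rightarrow> complex mat set" where
  "sl_alg N = {X \<in> carrier_mat N N. mtrace X = 0}"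

definition so_alg :: "nat \<Rightarrow> complex mat set" where
  "so_alg N = {X \<in> carrier_mat N N. X\<^sup>T * J_orth N + J_orth N * X = 0\<^sub>m N N}"

definition sp_alg :: "nat \<Rightarrow> complex mat set" where
  "sp_alg n = {X \<in> carrier_mat (2*n) (2*n). X\<^sup>T * J_symp n + J_symp n * X = 0\<^sub>m (2*n) (2*n)}"

text \<open>g is a simple Lie algebra of classical type (A, B, C or D), realised in its standard
  form inside gl_N, so that the standard triangular decomposition is given by
  diagonal / strictly upper / strictly lower triangular matrices.\<close>
definition classical_simple :: "nat \<Rightarrow> complex mat set \<Rightarrow> bool" where
  "classical_simple N g \<longleftrightarrow>
     (N \<ge> 2 \<and> g = sl_alg N)
   \<or> ((N = 3 \<or> N \<ge> 5) \<and> g = so_alg N)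
   \<or> (\<exists>n\<ge>1. N = 2*n \<and> g = sp_alg n)"

definition cartan :: "nat \<Rightarrow> complex mat set \<Rightarrow> complex mat set" where
  "cartan N g = {X \<in> g. \<forall>i<N. \<forall>j<N. i \<noteq> j \<longrightarrow> X $$ (i,j) = 0}"

definition npos :: "nat \<Rightarrow> complex mat set \<Rightarrow> complex mat set" where
  "npos N g = {X \<in> g. \<forall>i<N. \<forall>j<N. j \<le> i \<longrightarrow> X $$ (i,j) = 0}"

definition nneg :: "nat \<Rightarrow> complex mat set \<Rightarrow> complex mat set" where
  "nneg N g = {X \<in> g. \<forall>i<N. \<forall>j<N. i \<le> j \<longrightarrow> X $$ (i,j) = 0}"

text \<open>Functionals on h are represented by functions on matrices; only their values on h matter.\<close>

definition root_space :: "nat \<Rightarrow> complex mat set \<Rightarrow> (complex mat \<Rightarrow> complex) \<Rightarrow> complex mat set" where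
  "root_space N g \<alpha> = {X \<in> g. \<forall>H \<in> cartan N g. lie_br H X = \<alpha> H \<cdot>\<^sub>m X}"

definition is_root :: "nat \<Rightarrow> complex mat set \<Rightarrow> (complex mat \<Rightarrow> complex) \<Rightarrow> bool" where
  "is_root N g \<alpha> \<longleftrightarrow> (\<exists>H \<in> cartan N g. \<alpha> H \<noteq> 0) \<and> (\<exists>X \<in> root_space N g \<alpha>. X \<noteq> 0\<^sub>m N N)"

definition pos_root :: "nat \<Rightarrow> complex mat set \<Rightarrow> (complex mat \<Rightarrow> complex) \<Rightarrow> bool" where
  "pos_root N g \<alpha> \<longleftrightarrow> is_root N g \<alpha> \<and> (\<exists>X \<in> root_space N g \<alpha>. X \<noteq> 0\<^sub>m N N \<and> X \<in> npos N g)"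

definition simple_roots :: "nat \<Rightarrow> complex mat set \<Rightarrow> ((complex mat \<Rightarrow> complex) \<Rightarrow> bool)
    \<Rightarrow> (complex mat \<Rightarrow> complex) \<Rightarrow> bool" where
  "simple_roots N g P \<alpha> \<longleftrightarrow> P \<alpha> \<and>
     \<not> (\<exists>\<beta> \<gamma>. P \<beta> \<and> P \<gamma> \<and> (\<forall>H \<in> cartan N g. \<alpha> H = \<beta> H + \<gamma> H))"

definition closed_root_subset :: "nat \<Rightarrow> complex mat set \<Rightarrow> (complex mat \<Rightarrow> complex) set \<Rightarrow> bool" where
  "closed_root_subset N g R' \<longleftrightarrow>
     (\<forall>\<alpha> \<in> R'. is_root N g \<alpha>)
   \<and> (\<forall>\<alpha> \<in> R'. \<forall>\<beta> \<in> R'. is_root N g (\<lambda>H. \<alpha> H + \<beta> H) \<longrightarrow> (\<lambda>H. \<alpha> H + \<beta> H) \<in> R')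
   \<and> (\<forall>\<alpha> \<in> R'. (\<lambda>H. - \<alpha> H) \<in> R')"

inductive_set mat_span :: "nat \<Rightarrow> complex mat set \<Rightarrow> complex mat set" for N S where
  zero: "0\<^sub>m N N \<in> mat_span N S"
| base: "X \<in> S \<Longrightarrow> X \<in> mat_span N S"
| add: "X \<in> mat_span N S \<Longrightarrow> Y \<in> mat_span N S \<Longrightarrow> X + Y \<in> mat_span N S"
| smult: "X \<in> mat_span N S \<Longrightarrow> c \<cdot>\<^sub>m X \<in> mat_span N S"

definition levi :: "nat \<Rightarrow> complex mat set \<Rightarrow> (complex mat \<Rightarrow> complex) set \<Rightarrow> complex mat set" where
  "levi N g R' = mat_span N
     ({lie_br X Y | X Y \<alpha>. \<alpha> \<in> R' \<and> X \<in> root_space N g \<alpha> \<and> Y \<in> root_space N g (\<lambda>H. - \<alpha> H)}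
      \<union> (\<Union>\<alpha> \<in> R'. root_space N g \<alpha>))"

definition Qplus :: "nat \<Rightarrow> complex mat set \<Rightarrow> (complex mat \<Rightarrow> complex) set \<Rightarrow> (complex mat \<Rightarrow> complex) \<Rightarrow> bool" where
  "Qplus N g R' \<mu> \<longleftrightarrow> (\<exists>as. (\<forall>\<alpha> \<in> set as. \<alpha> \<in> R' \<and> pos_root N g \<alpha>) \<and>
       (\<forall>H \<in> cartan N g. \<mu> H = sum_list (map (\<lambda>\<alpha>. \<alpha> H) as)))"

text \<open>A representation of g \<otimes> C[t] on W = C^m, given on the basis-like elements x \<otimes> t^k:
  rho k X is the action of X \<otimes> t^k.\<close>
definition current_rep :: "nat \<Rightarrow> complex mat set \<Rightarrow> nat \<Rightarrow> (nat \<Rightarrow> complex mat \<Rightarrow> complex mat) \<Rightarrow> bool" where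
  "current_rep N g m \<rho> \<longleftrightarrow>
     (\<forall>k. \<forall>X \<in> g. \<rho> k X \<in> carrier_mat m m)
   \<and> (\<forall>k. \<forall>X \<in> g. \<forall>Y \<in> g. \<rho> k (X + Y) = \<rho> k X + \<rho> k Y)
   \<and> (\<forall>k c. \<forall>X \<in> g. \<rho> k (c \<cdot>\<^sub>m X) = c \<cdot>\<^sub>m \<rho> k X)
   \<and> (\<forall>k l. \<forall>X \<in> g. \<forall>Y \<in> g. \<rho> (k + l) (lie_br X Y) = lie_br (\<rho> k X) (\<rho> l Y))"

text \<open>U(L \<otimes> C[t]).w : the smallest subspace of C^m containing w and stable under all
  X \<otimes> t^k with X \<in> L (equivalently, the image of w under U(L \<otimes> C[t])).\<close>
inductive_set cyclic_sub :: "nat \<Rightarrow> (nat \<Rightarrow> complex mat \<Rightarrow> complex mat) \<Rightarrow> complex mat set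
    \<Rightarrow> complex vec \<Rightarrow> complex vec set" for m \<rho> L w where
  gen: "w \<in> cyclic_sub m \<rho> L w"
| zero: "0\<^sub>v m \<in> cyclic_sub m \<rho> L w"
| add: "u \<in> cyclic_sub m \<rho> L w \<Longrightarrow> v \<in> cyclic_sub m \<rho> L w \<Longrightarrow> u + v \<in> cyclic_sub m \<rho> L w"
| smult: "u \<in> cyclic_sub m \<rho> L w \<Longrightarrow> c \<cdot>\<^sub>v u \<in> cyclic_sub m \<rho> L w"
| act: "X \<in> L \<Longrightarrow> u \<in> cyclic_sub m \<rho> L w \<Longrightarrow> \<rho> k X *\<^sub>v u \<in> cyclic_sub m \<rho> L w"

definition weight_space :: "nat \<Rightarrow> complex mat set \<Rightarrow> nat \<Rightarrow> (nat \<Rightarrow> complex mat \<Rightarrow> complex mat)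
    \<Rightarrow> (complex mat \<Rightarrow> complex) \<Rightarrow> complex vec set" where
  "weight_space N g m \<rho> \<nu> = {v \<in> carrier_vec m. \<forall>H \<in> cartan N g. \<rho> 0 H *\<^sub>v v = \<nu> H \<cdot>\<^sub>v v}"

inductive_set vec_sum_span :: "nat \<Rightarrow> complex vec set \<Rightarrow> complex vec set" for m S where
  zero: "0\<^sub>v m \<in> vec_sum_span m S"
| base: "v \<in> S \<Longrightarrow> v \<in> vec_sum_span m S"
| add: "u \<in> vec_sum_span m S \<Longrightarrow> v \<in> vec_sum_span m S \<Longrightarrow> u + v \<in> vec_sum_span m S"

end

theory Submission imports Defs begin
lemma mult_entry:
  assumes "A \<in> carrier_mat N N" "B \<in> carrier_mat N N" "i < N" "j < N"
  shows "(A * B) $$ (i,j) = (\<Sum>k<N. A $$ (i,k) * B $$ (k,j))"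
  using assms by (auto simp: scalar_prod_def lessThan_atLeast0 intro!: sum.cong)

lemma br_diag:
  assumes H: "H \<in> carrier_mat N N" and Hd: "\<forall>i<N. \<forall>j<N. i \<noteq> j \<longrightarrow> H $$ (i,j) = 0"
    and X: "X \<in> carrier_mat N N"
  shows "lie_br H X = mat N N (\<lambda>(i,j). (H$$(i,i) - H$$(j,j)) * X$$(i,j))"
proof (rule eq_matI)
  fix i j assume i: "i < dim_row (mat N N (\<lambda>(i,j). (H$$(i,i) - H$$(j,j)) * X$$(i,j)))"
    and j: "j < dim_col (mat N N (\<lambda>(i,j). (H$$(i,i) - H$$(j,j)) * X$$(i,j)))"
  hence i: "i < N" and j: "j < N" by auto
  have 1: "(H * X) $$ (i,j) = H$$(i,i) * X$$(i,j)"
  proof -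
    have "(H * X) $$ (i,j) = (\<Sum>k<N. H $$ (i,k) * X $$ (k,j))" using mult_entry[OF H X i j] .
    also have "\<dots> = (\<Sum>k<N. if k = i then H$$(i,i) * X$$(i,j) else 0)"
      by (rule sum.cong) (use Hd i in auto)
    finally show ?thesis using i by simp
  qed
  have 2: "(X * H) $$ (i,j) = X$$(i,j) * H$$(j,j)"
  proof -
    have "(X * H) $$ (i,j) = (\<Sum>k<N. X $$ (i,k) * H $$ (k,j))" using mult_entry[OF X H i j] .
    also have "\<dots> = (\<Sum>k<N. if k = j then X$$(i,j) * H$$(j,j) else 0)"
      by (rule sum.cong) (use Hd j in auto)
    finally show ?thesis using j by simp
  qed
  show "lie_br H X $$ (i,j) = mat N N (\<lambda>(i,j). (H$$(i,i) - H$$(j,j)) * X$$(i,j)) $$ (i,j)"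
    using 1 2 i j H X by (simp add: lie_br_def algebra_simps)
qed (use H X in \<open>auto simp: lie_br_def\<close>)


inductive_set vspan :: "nat \<Rightarrow> complex vec set \<Rightarrow> complex vec set" for m S where
  zero: "0\<^sub>v m \<in> vspan m S"
| base: "v \<in> S \<Longrightarrow> v \<in> vspan m S"
| add: "u \<in> vspan m S \<Longrightarrow> v \<in> vspan m S \<Longrightarrow> u + v \<in> vspan m S"
| smult: "u \<in> vspan m S \<Longrightarrow> c \<cdot>\<^sub>v u \<in> vspan m S"

lemma vspan_carrier: "v \<in> vspan m S \<Longrightarrow> S \<subseteq> carrier_vec m \<Longrightarrow> v \<in> carrier_vec m"
  by (induction rule: vspan.induct) auto

lemma vspan_mono: "v \<in> vspan m S \<Longrightarrow> S \<subseteq> T \<Longrightarrow> v \<in> vspan m T"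
  by (induction rule: vspan.induct) (auto intro: vspan.intros)

lemma vspan_sub: "v \<in> vspan m S \<Longrightarrow> S \<subseteq> vspan m T \<Longrightarrow> v \<in> vspan m T"
  by (induction rule: vspan.induct) (auto intro: vspan.intros)

lemma vspan_finite: "v \<in> vspan m S \<Longrightarrow> \<exists>F. finite F \<and> F \<subseteq> S \<and> v \<in> vspan m F"
proof (induction rule: vspan.induct)
  case zero then show ?case by (auto intro: vspan.intros)
next
  case (base v) then show ?case by (intro exI[of _ "{v}"]) (auto intro: vspan.intros)
next
  case (add u v)
  then obtain F G where "finite F" "F \<subseteq> S" "u \<in> vspan m F" "finite G" "G \<subseteq> S" "v \<in> vspan m G" by blast
  then show ?case by (intro exI[of _ "F \<union> G"]) (auto intro: vspan.intros vspan_mono)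
next
  case (smult u c) then show ?case by (auto intro: vspan.intros)
qed

lemma vspan_insert:
  assumes "v \<in> vspan m (insert x S)" "S \<subseteq> carrier_vec m" "x \<in> carrier_vec m"
  shows "\<exists>a v'. v' \<in> vspan m S \<and> v = a \<cdot>\<^sub>v x + v'"
  using assms
proof (induction rule: vspan.induct)
  case zero then show ?case by (intro exI[of _ 0] exI[of _ "0\<^sub>v m"]) (auto intro: vspan.intros)
next
  case (base v)
  then show ?case
  proof (cases "v = x")
    case True then show ?thesis using base by (intro exI[of _ 1] exI[of _ "0\<^sub>v m"]) (auto intro: vspan.intros)
  next
    case False then show ?thesis using base by (intro exI[of _ 0] exI[of _ v]) (auto intro: vspan.intros intro!: eq_vecI)
  qed
next
  case (add u v)
  then obtain a u1 b v1 where h: "u1 \<in> vspan m S" "u = a \<cdot>\<^sub>v x + u1" "v1 \<in> vspan m S" "v = b \<cdot>\<^sub>v x + v1" by blast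
  have c: "u1 \<in> carrier_vec m" "v1 \<in> carrier_vec m" using h vspan_carrier add by blast+
  have "u + v = (a + b) \<cdot>\<^sub>v x + (u1 + v1)" using h(2,4) c add.prems by (auto intro!: eq_vecI simp: algebra_simps)
  moreover have "u1 + v1 \<in> vspan m S" using h by (intro vspan.add)
  ultimately show ?case by blast
next
  case (smult u c)
  then obtain a u1 where h: "u1 \<in> vspan m S" "u = a \<cdot>\<^sub>v x + u1" by blast
  have cc: "u1 \<in> carrier_vec m" using h vspan_carrier smult by blast
  have "c \<cdot>\<^sub>v u = (c * a) \<cdot>\<^sub>v x + c \<cdot>\<^sub>v u1" using h(2) cc smult.prems by (auto intro!: eq_vecI simp: algebra_simps)
  moreover have "c \<cdot>\<^sub>v u1 \<in> vspan m S" using h by (intro vspan.smult)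
  ultimately show ?case by blast
qed

lemma vspan_shift:
  assumes A: "A \<in> carrier_mat m m"
    and P: "\<And>u c. (u,c) \<in> P \<Longrightarrow> u \<in> carrier_vec m \<and> A *\<^sub>v u = c \<cdot>\<^sub>v u"
    and v: "v \<in> vspan m (fst ` P)"
  shows "A *\<^sub>v v - c0 \<cdot>\<^sub>v v \<in> vspan m (fst ` P)"
  using v
proof (induction rule: vspan.induct)
  case zero
  have "A *\<^sub>v 0\<^sub>v m - c0 \<cdot>\<^sub>v 0\<^sub>v m = 0\<^sub>v m" using A by (auto intro!: eq_vecI)
  then show ?case by (auto intro: vspan.intros)
next
  case (base v)
  then obtain c where uc: "(v,c) \<in> P" by auto
  then have "A *\<^sub>v v - c0 \<cdot>\<^sub>v v = (c - c0) \<cdot>\<^sub>v v" using P[OF uc]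
    by (auto intro!: eq_vecI simp: algebra_simps)
  then show ?case using base by (auto intro!: vspan.intros)
next
  case (add u v)
  have c: "u \<in> carrier_vec m" "v \<in> carrier_vec m" using add vspan_carrier[of _ m "fst ` P"] P by force+
  have "A *\<^sub>v (u + v) - c0 \<cdot>\<^sub>v (u + v) = (A *\<^sub>v u - c0 \<cdot>\<^sub>v u) + (A *\<^sub>v v - c0 \<cdot>\<^sub>v v)"
    using c A by (auto intro!: eq_vecI simp: mult_add_distrib_mat_vec algebra_simps)
  then show ?case using add by (auto intro: vspan.intros)
next
  case (smult u c)
  have c: "u \<in> carrier_vec m" using smult vspan_carrier[of _ m "fst ` P"] P by force+
  have "A *\<^sub>v (c \<cdot>\<^sub>v u) - c0 \<cdot>\<^sub>v (c \<cdot>\<^sub>v u) = c \<cdot>\<^sub>v (A *\<^sub>v u - c0 \<cdot>\<^sub>v u)"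
    using c A by (auto intro!: eq_vecI simp: mult_mat_vec algebra_simps)
  then show ?case using smult by (auto intro: vspan.intros)
qed

lemma eig_proj_fin:
  assumes A: "A \<in> carrier_mat m m" and F: "finite F"
  shows "F \<subseteq> P \<Longrightarrow> (\<And>u c. (u,c) \<in> P \<Longrightarrow> u \<in> carrier_vec m \<and> A *\<^sub>v u = c \<cdot>\<^sub>v u) \<Longrightarrow>
     v \<in> vspan m (fst ` F) \<Longrightarrow> A *\<^sub>v v = e \<cdot>\<^sub>v v \<Longrightarrow> v \<in> vspan m (fst ` {p\<in>F. snd p = e})"
  using F
proof (induction F arbitrary: v rule: finite_induct)
  case empty
  have "v = 0\<^sub>v m" using empty(3) by (induction rule: vspan.induct) auto
  then show ?case by (auto intro: vspan.intros)
next
  case (insert p F)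
  obtain u0 c0 where p: "p = (u0,c0)" by (cases p)
  have Pp: "u0 \<in> carrier_vec m" "A *\<^sub>v u0 = c0 \<cdot>\<^sub>v u0" using insert(4,5) p by auto
  have FC: "fst ` F \<subseteq> carrier_vec m" using insert(4,5) by force
  obtain a v' where v': "v' \<in> vspan m (fst ` F)" "v = a \<cdot>\<^sub>v u0 + v'"
    using vspan_insert[of v m u0 "fst ` F"] insert(6) p FC Pp by auto
  have v'c: "v' \<in> carrier_vec m" using vspan_carrier[OF v'(1) FC] .
  have sub: "fst ` {p\<in>F. snd p = e} \<subseteq> fst ` {p\<in>insert (u0,c0) F. snd p = e}" by auto
  show ?case
  proof (cases "c0 = e")
    case True
    have "A *\<^sub>v v' = e \<cdot>\<^sub>v v'"
    proof -
      have "A *\<^sub>v v = a \<cdot>\<^sub>v (A *\<^sub>v u0) + A *\<^sub>v v'" using v' v'c Pp A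
        by (simp add: mult_add_distrib_mat_vec mult_mat_vec)
      then have "e \<cdot>\<^sub>v (a \<cdot>\<^sub>v u0 + v') = a \<cdot>\<^sub>v (e \<cdot>\<^sub>v u0) + A *\<^sub>v v'" using insert(7) v' Pp True by simp
      then have q: "\<And>i. i < m \<Longrightarrow> (e \<cdot>\<^sub>v (a \<cdot>\<^sub>v u0 + v')) $ i = (a \<cdot>\<^sub>v (e \<cdot>\<^sub>v u0) + A *\<^sub>v v') $ i" by simp
      show ?thesis
      proof (rule eq_vecI)
        fix i assume "i < dim_vec (e \<cdot>\<^sub>v v')"
        then have i: "i < m" using v'c by simp
        show "(A *\<^sub>v v') $ i = (e \<cdot>\<^sub>v v') $ i" using q[OF i] i v'c Pp A by (simp add: algebra_simps)
      qed (use A v'c in simp)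
    qed
    then have "v' \<in> vspan m (fst ` {p\<in>F. snd p = e})" using insert v' by auto
    then have "v' \<in> vspan m (fst ` {p\<in>insert (u0,c0) F. snd p = e})" using sub by (rule vspan_mono)
    moreover have "u0 \<in> fst ` {p\<in>insert (u0,c0) F. snd p = e}" using True by force
    ultimately show ?thesis using v'(2) p by (metis vspan.add vspan.base vspan.smult)
  next
    case False
    have sh: "A *\<^sub>v v' - c0 \<cdot>\<^sub>v v' \<in> vspan m (fst ` F)"
      by (rule vspan_shift[OF A _ v'(1)]) (use insert in auto)
    have eqv: "A *\<^sub>v v - c0 \<cdot>\<^sub>v v = A *\<^sub>v v' - c0 \<cdot>\<^sub>v v'"
      using v' v'c Pp A by (auto intro!: eq_vecI simp: mult_add_distrib_mat_vec mult_mat_vec algebra_simps)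
    have eig: "A *\<^sub>v (A *\<^sub>v v - c0 \<cdot>\<^sub>v v) = e \<cdot>\<^sub>v (A *\<^sub>v v - c0 \<cdot>\<^sub>v v)"
    proof -
      have vc: "v \<in> carrier_vec m" using v' v'c Pp by auto
      show ?thesis using insert(7) vc A
        by (auto intro!: eq_vecI simp: mult_minus_distrib_mat_vec mult_mat_vec algebra_simps)
    qed
    have "A *\<^sub>v v - c0 \<cdot>\<^sub>v v \<in> vspan m (fst ` {p\<in>F. snd p = e})"
      using insert(3)[OF _ insert(5)] insert(4) sh eig eqv by auto
    then have h: "A *\<^sub>v v - c0 \<cdot>\<^sub>v v \<in> vspan m (fst ` {p\<in>insert (u0,c0) F. snd p = e})"
      using sub by (rule vspan_mono)
    have vc: "v \<in> carrier_vec m" using v' v'c Pp by auto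
    have "v = inverse (e - c0) \<cdot>\<^sub>v (A *\<^sub>v v - c0 \<cdot>\<^sub>v v)"
      using insert(7) vc A False by (auto intro!: eq_vecI simp: field_simps)
    then show ?thesis using h p by (metis vspan.smult)
  qed
qed

lemma eig_proj:
  assumes A: "A \<in> carrier_mat m m"
    and P: "\<And>u c. (u,c) \<in> P \<Longrightarrow> u \<in> carrier_vec m \<and> A *\<^sub>v u = c \<cdot>\<^sub>v u"
    and v: "v \<in> vspan m (fst ` P)" and e: "A *\<^sub>v v = e \<cdot>\<^sub>v v"
  shows "v \<in> vspan m (fst ` {p\<in>P. snd p = e})"
proof -
  obtain G where G: "finite G" "G \<subseteq> fst ` P" "v \<in> vspan m G" using vspan_finite[OF v] by blast
  obtain F where F: "F \<subseteq> P" "G = fst ` F" "finite F" using G(1,2) by (meson finite_subset_image)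
  have "v \<in> vspan m (fst ` {p\<in>F. snd p = e})"
    by (rule eig_proj_fin[OF A F(3) F(1) P]) (use G F e in auto)
  then show ?thesis by (rule vspan_mono) (use F in auto)
qed


definition up_part :: "nat \<Rightarrow> complex mat \<Rightarrow> complex mat" where
  "up_part N X = mat N N (\<lambda>(i,j). if i < j then X$$(i,j) else 0)"
definition lo_part :: "nat \<Rightarrow> complex mat \<Rightarrow> complex mat" where
  "lo_part N X = mat N N (\<lambda>(i,j). if j < i then X$$(i,j) else 0)"
definition dg_part :: "nat \<Rightarrow> complex mat \<Rightarrow> complex mat" where
  "dg_part N X = mat N N (\<lambda>(i,j). if i = j then X$$(i,j) else 0)"
definition H0 :: "nat \<Rightarrow> complex mat" where
  "H0 N = mat N N (\<lambda>(i,j). if i = j then (of_nat N - 1)/2 - of_nat i else 0)"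
definition dif :: "nat \<Rightarrow> nat \<Rightarrow> complex mat \<Rightarrow> complex" where
  "dif a b H = H$$(a,a) - H$$(b,b)"
definition feq :: "nat \<Rightarrow> complex mat set \<Rightarrow> (complex mat \<Rightarrow> complex) \<Rightarrow> (complex mat \<Rightarrow> complex) \<Rightarrow> bool" where
  "feq N g \<alpha> \<beta> \<longleftrightarrow> (\<forall>H\<in>cartan N g. \<alpha> H = \<beta> H)"
definition prp :: "nat \<Rightarrow> complex mat set \<Rightarrow> nat \<Rightarrow> nat \<Rightarrow> bool" where
  "prp N g a b \<longleftrightarrow> a < b \<and> b < N \<and> (\<exists>X\<in>g. X$$(a,b) \<noteq> 0)"

locale cls =
  fixes N :: nat and g :: "complex mat set" and step :: "nat \<Rightarrow> nat \<Rightarrow> bool"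
  assumes g_carrier: "g \<subseteq> carrier_mat N N"
  and g_zero: "0\<^sub>m N N \<in> g"
  and g_add: "X \<in> g \<Longrightarrow> Y \<in> g \<Longrightarrow> X + Y \<in> g"
  and g_smult: "X \<in> g \<Longrightarrow> c \<cdot>\<^sub>m X \<in> g"
  and g_br: "X \<in> g \<Longrightarrow> Y \<in> g \<Longrightarrow> lie_br X Y \<in> g"
  and g_tr: "X \<in> g \<Longrightarrow> X\<^sup>T \<in> g"
  and g_up: "X \<in> g \<Longrightarrow> up_part N X \<in> g"
  and g_dg: "X \<in> g \<Longrightarrow> dg_part N X \<in> g"
  and H0_g: "H0 N \<in> g"
  and comp: "Y \<in> g \<Longrightarrow> a < N \<Longrightarrow> b < N \<Longrightarrow> a \<noteq> b \<Longrightarrow> \<exists>C\<in>g. C$$(a,b) = Y$$(a,b) \<and>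
       (\<forall>i<N. \<forall>j<N. C$$(i,j) = 0 \<or> C$$(i,j) = Y$$(i,j)) \<and>
       (\<forall>i<N. \<forall>j<N. C$$(i,j) \<noteq> 0 \<longrightarrow> feq N g (dif i j) (dif a b))"
  and step_prp: "step a b \<Longrightarrow> prp N g a b"
  and S2: "prp N g a b \<Longrightarrow> step a b \<or> (\<exists>c d e f. prp N g c d \<and> step e f \<and> d - c < b - a \<and>
            feq N g (dif a b) (\<lambda>H. dif c d H + dif e f H))"
  and S3: "(\<And>a b c d. step a b \<Longrightarrow> step c d \<Longrightarrow> feq N g (dif a b) (dif c d) \<Longrightarrow> P a b = P c d) \<Longrightarrow>
       \<exists>H\<in>cartan N g. \<forall>a b. step a b \<longrightarrow> dif a b H = (if P a b then 0 else 1)"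
begin

lemma gC: "X \<in> g \<Longrightarrow> X \<in> carrier_mat N N" using g_carrier by auto

lemma cartan_g: "H \<in> cartan N g \<Longrightarrow> H \<in> g" by (auto simp: cartan_def)
lemma cartan_C: "H \<in> cartan N g \<Longrightarrow> H \<in> carrier_mat N N" using gC cartan_g by auto
lemma cartan_d: "H \<in> cartan N g \<Longrightarrow> i < N \<Longrightarrow> j < N \<Longrightarrow> i \<noteq> j \<Longrightarrow> H $$ (i,j) = 0"
  by (auto simp: cartan_def)

lemma H0_cartan: "H0 N \<in> cartan N g" using H0_g by (auto simp: cartan_def H0_def)
lemma H0_dif: "i < N \<Longrightarrow> j < N \<Longrightarrow> dif i j (H0 N) = of_nat j - of_nat i"
  by (simp add: dif_def H0_def)

lemma br_cartan: "H \<in> cartan N g \<Longrightarrow> X \<in> carrier_mat N N \<Longrightarrow>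
   lie_br H X = mat N N (\<lambda>(i,j). dif i j H * X$$(i,j))"
  using br_diag[of H N X] cartan_C cartan_d unfolding dif_def by blast

lemma rs_iff: "X \<in> root_space N g \<alpha> \<longleftrightarrow> X \<in> g \<and>
   (\<forall>H\<in>cartan N g. \<forall>i<N. \<forall>j<N. dif i j H * X$$(i,j) = \<alpha> H * X$$(i,j))"
proof -
  have "lie_br H X = \<alpha> H \<cdot>\<^sub>m X \<longleftrightarrow> (\<forall>i<N. \<forall>j<N. dif i j H * X$$(i,j) = \<alpha> H * X$$(i,j))"
    if "H \<in> cartan N g" "X \<in> g" for H
  proof -
    have X: "X \<in> carrier_mat N N" using gC that by auto
    show ?thesis unfolding br_cartan[OF that(1) X]
    proof
      assume e: "mat N N (\<lambda>(i,j). dif i j H * X$$(i,j)) = \<alpha> H \<cdot>\<^sub>m X"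
      show "\<forall>i<N. \<forall>j<N. dif i j H * X$$(i,j) = \<alpha> H * X$$(i,j)"
      proof (intro allI impI)
        fix i j assume "i < N" "j < N"
        then show "dif i j H * X$$(i,j) = \<alpha> H * X$$(i,j)"
          using arg_cong[OF e, of "\<lambda>M. M $$ (i,j)"] X by simp
      qed
    next
      assume "\<forall>i<N. \<forall>j<N. dif i j H * X$$(i,j) = \<alpha> H * X$$(i,j)"
      then show "mat N N (\<lambda>(i,j). dif i j H * X$$(i,j)) = \<alpha> H \<cdot>\<^sub>m X"
        using X by (intro eq_matI) auto
    qed
  qed
  then show ?thesis unfolding root_space_def by blast
qed

lemma rs_feq: "feq N g \<alpha> \<beta> \<Longrightarrow> root_space N g \<alpha> = root_space N g \<beta>"
  by (auto simp: rs_iff feq_def)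

lemma rs_entry: "X \<in> root_space N g \<alpha> \<Longrightarrow> i < N \<Longrightarrow> j < N \<Longrightarrow> X$$(i,j) \<noteq> 0 \<Longrightarrow> feq N g (dif i j) \<alpha>"
  unfolding rs_iff feq_def by auto

lemma rs_g: "X \<in> root_space N g \<alpha> \<Longrightarrow> X \<in> g" by (auto simp: root_space_def)

lemma lo_part_eq: "X \<in> carrier_mat N N \<Longrightarrow> lo_part N X = (up_part N (X\<^sup>T))\<^sup>T"
  by (auto simp: lo_part_def up_part_def)

lemma g_lo: "X \<in> g \<Longrightarrow> lo_part N X \<in> g"
  using gC g_tr g_up lo_part_eq by metis

lemma parts_sum: "X \<in> carrier_mat N N \<Longrightarrow> X = up_part N X + dg_part N X + lo_part N X"
  by (auto simp: up_part_def lo_part_def dg_part_def)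

lemma parts_C: "up_part N X \<in> carrier_mat N N" "dg_part N X \<in> carrier_mat N N" "lo_part N X \<in> carrier_mat N N"
  by (auto simp: up_part_def lo_part_def dg_part_def)

lemma rs_up: "X \<in> root_space N g \<alpha> \<Longrightarrow> up_part N X \<in> root_space N g \<alpha>"
  unfolding rs_iff using g_up by (auto simp: up_part_def)
lemma rs_lo: "X \<in> root_space N g \<alpha> \<Longrightarrow> lo_part N X \<in> root_space N g \<alpha>"
  unfolding rs_iff using g_lo by (auto simp: lo_part_def)
lemma rs_dg: "X \<in> root_space N g \<alpha> \<Longrightarrow> dg_part N X \<in> root_space N g \<alpha>"
  unfolding rs_iff using g_dg by (auto simp: dg_part_def)

lemma dg_cartan: "X \<in> g \<Longrightarrow> dg_part N X \<in> cartan N g"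
  using g_dg by (auto simp: cartan_def dg_part_def)

lemma rs_dg_zero: assumes X: "X \<in> root_space N g \<alpha>" and H: "H \<in> cartan N g" and a: "\<alpha> H \<noteq> 0"
  shows "dg_part N X = 0\<^sub>m N N"
proof (rule eq_matI)
  fix i j assume "i < dim_row (0\<^sub>m N N :: complex mat)" "j < dim_col (0\<^sub>m N N :: complex mat)"
  then have ij: "i < N" "j < N" by auto
  have "dif i i H * X$$(i,i) = \<alpha> H * X$$(i,i)" using X H ij unfolding rs_iff by auto
  then have "X$$(i,i) = 0" using a by (simp add: dif_def)
  moreover have "dif j j H * X$$(j,j) = \<alpha> H * X$$(j,j)" using X H ij unfolding rs_iff by auto
  then have "X$$(j,j) = 0" using a by (simp add: dif_def)
  ultimately show "dg_part N X $$ (i,j) = 0\<^sub>m N N $$ (i,j)" using ij by (simp add: dg_part_def)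
qed (auto simp: dg_part_def)

lemma rs0_dg: "X \<in> root_space N g \<alpha> \<Longrightarrow> feq N g \<alpha> (\<lambda>H. 0) \<Longrightarrow> X = dg_part N X"
proof -
  assume X: "X \<in> root_space N g \<alpha>" and f: "feq N g \<alpha> (\<lambda>H. 0)"
  have XC: "X \<in> carrier_mat N N" using gC rs_g X by auto
  show ?thesis
  proof (rule eq_matI)
    fix i j assume "i < dim_row (dg_part N X)" "j < dim_col (dg_part N X)"
    then have ij: "i < N" "j < N" by (auto simp: dg_part_def)
    show "X $$ (i,j) = dg_part N X $$ (i,j)"
    proof (cases "i = j")
      case False
      have "dif i j (H0 N) * X$$(i,j) = \<alpha> (H0 N) * X$$(i,j)" using X H0_cartan ij unfolding rs_iff by auto
      moreover have "\<alpha> (H0 N) = 0" using f H0_cartan by (auto simp: feq_def)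
      moreover have "dif i j (H0 N) \<noteq> 0" using H0_dif ij False by auto
      ultimately show ?thesis using False ij by (simp add: dg_part_def)
    qed (use ij in \<open>simp add: dg_part_def\<close>)
  qed (use XC in \<open>auto simp: dg_part_def\<close>)
qed

lemma jacobi: assumes X: "X \<in> root_space N g \<alpha>" and Y: "Y \<in> root_space N g \<beta>"
  shows "lie_br X Y \<in> root_space N g (\<lambda>H. \<alpha> H + \<beta> H)"
proof -
  have XC: "X \<in> carrier_mat N N" and YC: "Y \<in> carrier_mat N N" using gC rs_g X Y by auto
  have Xe: "\<And>H i j. H \<in> cartan N g \<Longrightarrow> i < N \<Longrightarrow> j < N \<Longrightarrow> dif i j H * X$$(i,j) = \<alpha> H * X$$(i,j)"
    using X unfolding rs_iff by auto
  have Ye: "\<And>H i j. H \<in> cartan N g \<Longrightarrow> i < N \<Longrightarrow> j < N \<Longrightarrow> dif i j H * Y$$(i,j) = \<beta> H * Y$$(i,j)"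
    using Y unfolding rs_iff by auto
  have "dif i j H * lie_br X Y $$(i,j) = (\<alpha> H + \<beta> H) * lie_br X Y $$(i,j)"
    if H: "H \<in> cartan N g" and ij: "i < N" "j < N" for H i j
  proof -
    have e: "lie_br X Y $$(i,j) = (\<Sum>k<N. X$$(i,k) * Y$$(k,j) - Y$$(i,k) * X$$(k,j))"
    proof -
      have c: "lie_br X Y $$(i,j) = (X*Y)$$(i,j) - (Y*X)$$(i,j)" unfolding lie_br_def
        by (rule index_minus_mat) (use XC YC ij in auto)
      show ?thesis unfolding c mult_entry[OF XC YC ij] mult_entry[OF YC XC ij] sum_subtractf ..
    qed
    have t: "dif i j H * (X$$(i,k) * Y$$(k,j) - Y$$(i,k) * X$$(k,j))
        = (\<alpha> H + \<beta> H) * (X$$(i,k) * Y$$(k,j) - Y$$(i,k) * X$$(k,j))" if k: "k < N" for k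
    proof -
      have d: "dif i j H = dif i k H + dif k j H" by (simp add: dif_def)
      have "dif i j H * (X$$(i,k) * Y$$(k,j)) = (dif i k H * X$$(i,k)) * Y$$(k,j) + X$$(i,k) * (dif k j H * Y$$(k,j))"
        unfolding d by (simp add: algebra_simps)
      also have "\<dots> = (\<alpha> H + \<beta> H) * (X$$(i,k) * Y$$(k,j))" unfolding Xe[OF H ij(1) k] Ye[OF H k ij(2)]
        by (simp add: algebra_simps)
      finally have 1: "dif i j H * (X$$(i,k) * Y$$(k,j)) = (\<alpha> H + \<beta> H) * (X$$(i,k) * Y$$(k,j))" .
      have "dif i j H * (Y$$(i,k) * X$$(k,j)) = (dif i k H * Y$$(i,k)) * X$$(k,j) + Y$$(i,k) * (dif k j H * X$$(k,j))"
        unfolding d by (simp add: algebra_simps)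
      also have "\<dots> = (\<alpha> H + \<beta> H) * (Y$$(i,k) * X$$(k,j))" unfolding Ye[OF H ij(1) k] Xe[OF H k ij(2)]
        by (simp add: algebra_simps)
      finally have 2: "dif i j H * (Y$$(i,k) * X$$(k,j)) = (\<alpha> H + \<beta> H) * (Y$$(i,k) * X$$(k,j))" .
      show ?thesis using 1 2 by (simp add: algebra_simps)
    qed
    show ?thesis unfolding e sum_distrib_left using t by (intro sum.cong) auto
  qed
  moreover have "lie_br X Y \<in> g" using g_br rs_g X Y by auto
  ultimately show ?thesis unfolding rs_iff by auto
qed

end

context cls begin

lemma feq_refl: "feq N g \<alpha> \<alpha>" by (simp add: feq_def)
lemma feq_sym: "feq N g \<alpha> \<beta> \<Longrightarrow> feq N g \<beta> \<alpha>" by (simp add: feq_def)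
lemma feq_trans: "feq N g \<alpha> \<beta> \<Longrightarrow> feq N g \<beta> \<gamma> \<Longrightarrow> feq N g \<alpha> \<gamma>" by (simp add: feq_def)

lemma is_root_feq: "feq N g \<alpha> \<beta> \<Longrightarrow> is_root N g \<alpha> \<Longrightarrow> is_root N g \<beta>"
  unfolding is_root_def using rs_feq[of \<alpha> \<beta>] by (auto simp: feq_def)

lemma pos_root_feq: "feq N g \<alpha> \<beta> \<Longrightarrow> pos_root N g \<alpha> \<Longrightarrow> pos_root N g \<beta>"
  unfolding pos_root_def using rs_feq[of \<alpha> \<beta>] is_root_feq by auto

lemma npos_entry: assumes "X \<in> npos N g" "X \<noteq> 0\<^sub>m N N"
  shows "\<exists>a b. a < b \<and> b < N \<and> X$$(a,b) \<noteq> 0"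
proof (rule ccontr)
  assume c: "\<not> ?thesis"
  have XC: "X \<in> carrier_mat N N" using assms gC by (auto simp: npos_def)
  have "X = 0\<^sub>m N N"
  proof (rule eq_matI)
    fix i j assume "i < dim_row (0\<^sub>m N N :: complex mat)" "j < dim_col (0\<^sub>m N N :: complex mat)"
    then have ij: "i < N" "j < N" by auto
    show "X $$ (i,j) = 0\<^sub>m N N $$ (i,j)"
    proof (cases "i < j")
      case True then show ?thesis using c ij by auto
    next
      case False then show ?thesis using assms(1) ij by (auto simp: npos_def)
    qed
  qed (use XC in auto)
  then show False using assms by auto
qed

lemma nneg_entry: assumes "X \<in> nneg N g" "X \<noteq> 0\<^sub>m N N"
  shows "\<exists>a b. b < a \<and> a < N \<and> X$$(a,b) \<noteq> 0"
proof (rule ccontr)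
  assume c: "\<not> ?thesis"
  have XC: "X \<in> carrier_mat N N" using assms gC by (auto simp: nneg_def)
  have "X = 0\<^sub>m N N"
  proof (rule eq_matI)
    fix i j assume "i < dim_row (0\<^sub>m N N :: complex mat)" "j < dim_col (0\<^sub>m N N :: complex mat)"
    then have ij: "i < N" "j < N" by auto
    show "X $$ (i,j) = 0\<^sub>m N N $$ (i,j)"
    proof (cases "j < i")
      case True then show ?thesis using c ij by auto
    next
      case False then show ?thesis using assms(1) ij by (auto simp: nneg_def)
    qed
  qed (use XC in auto)
  then show False using assms by auto
qed

lemma pos_prp: assumes "pos_root N g \<beta>" shows "\<exists>a b. prp N g a b \<and> feq N g (dif a b) \<beta>"
proof -
  obtain X where X: "X \<in> root_space N g \<beta>" "X \<noteq> 0\<^sub>m N N" "X \<in> npos N g"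
    using assms by (auto simp: pos_root_def)
  obtain a b where ab: "a < b" "b < N" "X$$(a,b) \<noteq> 0" using npos_entry[OF X(3,2)] by auto
  have "prp N g a b" using ab X rs_g by (auto simp: prp_def)
  moreover have "feq N g (dif a b) \<beta>" using rs_entry[OF X(1)] ab by auto
  ultimately show ?thesis by blast
qed

lemma comp_rs: assumes Y: "Y \<in> g" and ab: "a < N" "b < N" "a \<noteq> b"
  shows "\<exists>C. C \<in> root_space N g (dif a b) \<and> C$$(a,b) = Y$$(a,b) \<and>
       (\<forall>i<N. \<forall>j<N. C$$(i,j) = 0 \<or> C$$(i,j) = Y$$(i,j))"
proof -
  obtain C where C: "C \<in> g" "C$$(a,b) = Y$$(a,b)" "\<forall>i<N. \<forall>j<N. C$$(i,j) = 0 \<or> C$$(i,j) = Y$$(i,j)"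
    "\<forall>i<N. \<forall>j<N. C$$(i,j) \<noteq> 0 \<longrightarrow> feq N g (dif i j) (dif a b)"
    using comp[OF Y ab] by blast
  have "C \<in> root_space N g (dif a b)" unfolding rs_iff using C(1,4) by (auto simp: feq_def)
  then show ?thesis using C by blast
qed

lemma prp_pos: assumes "prp N g a b" shows "pos_root N g (dif a b)"
proof -
  obtain X where X: "X \<in> g" "X$$(a,b) \<noteq> 0" and ab: "a < b" "b < N" using assms by (auto simp: prp_def)
  have U: "up_part N X \<in> g" using g_up X by auto
  obtain C where C: "C \<in> root_space N g (dif a b)" "C$$(a,b) = up_part N X$$(a,b)"
      "\<forall>i<N. \<forall>j<N. C$$(i,j) = 0 \<or> C$$(i,j) = up_part N X$$(i,j)"
    using comp_rs[OF U, of a b] ab by auto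
  have Cab: "C$$(a,b) \<noteq> 0" using C(2) X ab by (auto simp: up_part_def)
  have CC: "C \<in> carrier_mat N N" using C(1) rs_g gC by blast
  have "C \<noteq> 0\<^sub>m N N" using Cab ab by auto
  moreover have "C \<in> npos N g"
  proof -
    have "C$$(i,j) = 0" if "i < N" "j < N" "j \<le> i" for i j
    proof -
      have "C$$(i,j) = 0 \<or> C$$(i,j) = up_part N X$$(i,j)" using C(3) that by blast
      then show ?thesis using that by (auto simp: up_part_def)
    qed
    then show ?thesis using C(1) rs_g by (auto simp: npos_def)
  qed
  moreover have "is_root N g (dif a b)"
    unfolding is_root_def using C(1) calculation H0_cartan H0_dif ab by (intro conjI bexI) auto
  ultimately show ?thesis using C(1) unfolding pos_root_def by blast
qed

lemma prp_H0: "prp N g a b \<Longrightarrow> dif a b (H0 N) = of_nat (b - a)"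
  by (auto simp: prp_def H0_dif of_nat_diff)

end

locale clsR = cls +
  fixes R' :: "(complex mat \<Rightarrow> complex) set"
  assumes R': "closed_root_subset N g R'"
  and simple: "\<And>\<alpha>. simple_roots N g (\<lambda>\<beta>. \<beta> \<in> R' \<and> pos_root N g \<beta>) \<alpha>
                     \<Longrightarrow> simple_roots N g (pos_root N g) \<alpha>"
begin

lemma R'_root: "\<alpha> \<in> R' \<Longrightarrow> is_root N g \<alpha>" using R' by (auto simp: closed_root_subset_def)
lemma R'_add: "\<alpha> \<in> R' \<Longrightarrow> \<beta> \<in> R' \<Longrightarrow> is_root N g (\<lambda>H. \<alpha> H + \<beta> H) \<Longrightarrow> (\<lambda>H. \<alpha> H + \<beta> H) \<in> R'"
  using R' by (auto simp: closed_root_subset_def)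
lemma R'_neg: "\<alpha> \<in> R' \<Longrightarrow> (\<lambda>H. - \<alpha> H) \<in> R'"
  using R' by (auto simp: closed_root_subset_def)

definition inR :: "nat \<Rightarrow> nat \<Rightarrow> bool" where
  "inR a b \<longleftrightarrow> (\<exists>\<rho>\<in>R'. feq N g \<rho> (dif a b))"

definition H1 :: "complex mat" where
  "H1 = (SOME H. H \<in> cartan N g \<and> (\<forall>a b. step a b \<longrightarrow> dif a b H = (if inR a b then 0 else 1)))"

lemma H1: "H1 \<in> cartan N g" "\<And>a b. step a b \<Longrightarrow> dif a b H1 = (if inR a b then 0 else 1)"
proof -
  have "\<exists>H\<in>cartan N g. \<forall>a b. step a b \<longrightarrow> dif a b H = (if inR a b then 0 else 1)"
    by (rule S3) (auto simp: inR_def intro: feq_trans feq_sym)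
  then have "H1 \<in> cartan N g \<and> (\<forall>a b. step a b \<longrightarrow> dif a b H1 = (if inR a b then 0 else 1))"
    unfolding H1_def by (rule someI2_bex) auto
  then show "H1 \<in> cartan N g" "\<And>a b. step a b \<Longrightarrow> dif a b H1 = (if inR a b then 0 else 1)" by auto
qed

lemma propA: "prp N g a b \<Longrightarrow> \<exists>n::nat. dif a b H1 = of_nat n"
proof (induction "b - a" arbitrary: a b rule: less_induct)
  case less
  show ?case
  proof (cases "step a b")
    case True then show ?thesis using H1(2)[OF True] by (cases "inR a b") (auto intro: exI[of _ 0] exI[of _ 1])
  next
    case False
    then obtain c d e f where cd: "prp N g c d" "step e f" "d - c < b - a"
       "feq N g (dif a b) (\<lambda>H. dif c d H + dif e f H)" using S2[OF less(2)] by blast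
    obtain n where n: "dif c d H1 = of_nat n" using less(1)[OF cd(3) cd(1)] by blast
    have "dif a b H1 = dif c d H1 + dif e f H1" using cd(4) H1(1) by (auto simp: feq_def)
    then show ?thesis using n H1(2)[OF cd(2)] by (cases "inR e f") (auto intro: exI[of _ n] exI[of _ "n+1"])
  qed
qed

lemma pos_A: "pos_root N g \<beta> \<Longrightarrow> \<exists>n::nat. \<beta> H1 = of_nat n"
  using pos_prp propA H1(1) by (metis feq_def)

lemma simple_step: assumes "simple_roots N g (pos_root N g) \<beta>"
  shows "\<exists>e f. step e f \<and> feq N g (dif e f) \<beta>"
proof -
  have pb: "pos_root N g \<beta>" using assms by (auto simp: simple_roots_def)
  obtain a b where ab: "prp N g a b" "feq N g (dif a b) \<beta>" using pos_prp[OF pb] by blast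
  show ?thesis
  proof (cases "step a b")
    case True then show ?thesis using ab by blast
  next
    case False
    then obtain c d e f where cd: "prp N g c d" "step e f"
       "feq N g (dif a b) (\<lambda>H. dif c d H + dif e f H)" using S2[OF ab(1)] by blast
    have "pos_root N g (dif c d)" "pos_root N g (dif e f)" using prp_pos cd(1) step_prp cd(2) by auto
    moreover have "\<forall>H\<in>cartan N g. \<beta> H = dif c d H + dif e f H" using cd(3) ab(2) by (auto simp: feq_def)
    ultimately have False using assms unfolding simple_roots_def by blast
    then show ?thesis ..
  qed
qed

lemma propB_aux: "\<forall>\<beta> a b. \<beta> \<in> R' \<longrightarrow> pos_root N g \<beta> \<longrightarrow> prp N g a b \<longrightarrow> feq N g (dif a b) \<beta> \<longrightarrow> b - a = h
   \<longrightarrow> \<beta> H1 = 0"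
proof (induction h rule: less_induct)
  case (less h)
  show ?case
  proof (intro allI impI)
    fix \<beta> a b assume b: "\<beta> \<in> R'" "pos_root N g \<beta>" "prp N g a b" "feq N g (dif a b) \<beta>" "b - a = h"
    show "\<beta> H1 = 0"
    proof (cases "simple_roots N g (\<lambda>\<beta>. \<beta> \<in> R' \<and> pos_root N g \<beta>) \<beta>")
      case True
      obtain e f where ef: "step e f" "feq N g (dif e f) \<beta>" using simple_step simple[OF True] by blast
      have "inR e f" using b(1) ef(2) by (auto simp: inR_def intro: feq_sym)
      then show ?thesis using H1 ef by (auto simp: feq_def)
    next
      case False
      then obtain \<beta>1 \<beta>2 where bb: "\<beta>1 \<in> R'" "pos_root N g \<beta>1" "\<beta>2 \<in> R'" "pos_root N g \<beta>2"
        "\<forall>H\<in>cartan N g. \<beta> H = \<beta>1 H + \<beta>2 H" using b(1,2) by (auto simp: simple_roots_def)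
      obtain c1 d1 where cd1: "prp N g c1 d1" "feq N g (dif c1 d1) \<beta>1" using pos_prp bb(2) by blast
      obtain c2 d2 where cd2: "prp N g c2 d2" "feq N g (dif c2 d2) \<beta>2" using pos_prp bb(4) by blast
      have "of_nat (b - a) = (of_nat (d1 - c1) + of_nat (d2 - c2) :: complex)"
        using prp_H0[OF b(3)] prp_H0[OF cd1(1)] prp_H0[OF cd2(1)] b(4) cd1(2) cd2(2) bb(5) H0_cartan
        by (auto simp: feq_def)
      then have hh: "b - a = (d1 - c1) + (d2 - c2)" by (metis of_nat_add of_nat_eq_iff)
      have "d1 - c1 > 0" "d2 - c2 > 0" using cd1(1) cd2(1) by (auto simp: prp_def)
      then have "d1 - c1 < h" "d2 - c2 < h" using hh b(5) by auto
      then have "\<beta>1 H1 = 0" "\<beta>2 H1 = 0"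
        using less[rule_format, OF _ bb(1,2) cd1(1,2) refl] less[rule_format, OF _ bb(3,4) cd2(1,2) refl] by auto
      then show ?thesis using bb(5) H1(1) by auto
    qed
  qed
qed

lemma propB: "\<beta> \<in> R' \<Longrightarrow> pos_root N g \<beta> \<Longrightarrow> \<beta> H1 = 0"
  using propB_aux pos_prp by blast

lemma propC_aux: "\<forall>a b. prp N g a b \<longrightarrow> b - a = h \<longrightarrow> dif a b H1 = 0 \<longrightarrow> inR a b"
proof (induction h rule: less_induct)
  case (less h)
  show ?case
  proof (intro allI impI)
    fix a b assume b: "prp N g a b" "b - a = h" "dif a b H1 = 0"
    show "inR a b"
    proof (cases "step a b")
      case True then show ?thesis using H1(2)[OF True] b(3) by (cases "inR a b") auto
    next
      case False
      then obtain c d e f where cd: "prp N g c d" "step e f" "d - c < b - a"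
         "feq N g (dif a b) (\<lambda>H. dif c d H + dif e f H)" using S2[OF b(1)] by blast
      obtain n where n: "dif c d H1 = of_nat n" using propA[OF cd(1)] by blast
      have s: "dif a b H1 = dif c d H1 + dif e f H1" using cd(4) H1(1) by (auto simp: feq_def)
      have ief: "inR e f" and n0: "n = 0"
      proof -
        have "0 = of_nat n + (if inR e f then 0 else 1 :: complex)" using s b(3) n H1(2)[OF cd(2)] by simp
        then have "inR e f \<and> n = 0" by (cases "inR e f") (simp_all, metis of_nat_Suc of_nat_eq_0_iff Suc_eq_plus1 add.commute nat.distinct(1))
        then show "inR e f" "n = 0" by auto
      qed
      have "dif c d H1 = 0" using n n0 by simp
      then have "inR c d" using less(1)[rule_format, OF _ cd(1) refl] cd(3) b(2) by auto
      then obtain \<rho>1 where r1: "\<rho>1 \<in> R'" "feq N g \<rho>1 (dif c d)" by (auto simp: inR_def)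
      obtain \<rho>2 where r2: "\<rho>2 \<in> R'" "feq N g \<rho>2 (dif e f)" using ief by (auto simp: inR_def)
      have fe: "feq N g (\<lambda>H. \<rho>1 H + \<rho>2 H) (dif a b)" using r1(2) r2(2) cd(4) by (auto simp: feq_def)
      have "is_root N g (dif a b)" using prp_pos[OF b(1)] by (auto simp: pos_root_def)
      then have "is_root N g (\<lambda>H. \<rho>1 H + \<rho>2 H)" using is_root_feq feq_sym[OF fe] by blast
      then have "(\<lambda>H. \<rho>1 H + \<rho>2 H) \<in> R'" using R'_add r1 r2 by blast
      then show ?thesis using fe by (auto simp: inR_def)
    qed
  qed
qed

lemma propC: "pos_root N g \<beta> \<Longrightarrow> \<beta> H1 = 0 \<Longrightarrow> \<exists>\<rho>\<in>R'. feq N g \<rho> \<beta>"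
proof -
  assume p: "pos_root N g \<beta>" and z: "\<beta> H1 = 0"
  obtain a b where ab: "prp N g a b" "feq N g (dif a b) \<beta>" using pos_prp[OF p] by blast
  have "dif a b H1 = 0" using ab(2) z H1(1) by (auto simp: feq_def)
  then have "inR a b" using propC_aux ab(1) by blast
  then show ?thesis using ab(2) by (auto simp: inR_def intro: feq_trans)
qed

lemma Qplus_H1: "Qplus N g R' \<mu> \<Longrightarrow> \<mu> H1 = 0"
proof -
  assume "Qplus N g R' \<mu>"
  then obtain as where as: "\<forall>\<alpha>\<in>set as. \<alpha> \<in> R' \<and> pos_root N g \<alpha>"
    "\<forall>H\<in>cartan N g. \<mu> H = sum_list (map (\<lambda>\<alpha>. \<alpha> H) as)" by (auto simp: Qplus_def)
  have "sum_list (map (\<lambda>\<alpha>. \<alpha> H1) as) = 0" using as(1)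
    by (induction as) (auto simp: propB)
  then show ?thesis using as(2) H1(1) by auto
qed

end

inductive_set Mset :: "nat \<Rightarrow> complex mat set \<Rightarrow> (nat \<Rightarrow> complex mat \<Rightarrow> complex mat) \<Rightarrow> complex vec
   \<Rightarrow> (complex mat \<Rightarrow> complex) \<Rightarrow> (complex vec \<times> (complex mat \<Rightarrow> complex)) set" for N g \<rho> w lam where
  gen: "(w, lam) \<in> Mset N g \<rho> w lam"
| act: "(u,\<beta>) \<in> Mset N g \<rho> w lam \<Longrightarrow> Y \<in> nneg N g \<Longrightarrow> Y \<in> root_space N g \<gamma> \<Longrightarrow> Y \<noteq> 0\<^sub>m N N
    \<Longrightarrow> (\<rho> k Y *\<^sub>v u, \<lambda>H. \<beta> H + \<gamma> H) \<in> Mset N g \<rho> w lam"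

context cls begin

lemma nz_ex: assumes "Y \<in> carrier_mat N N" "Y \<noteq> 0\<^sub>m N N" shows "\<exists>i j. i < N \<and> j < N \<and> Y$$(i,j) \<noteq> 0"
proof (rule ccontr)
  assume "\<not> ?thesis"
  then have "Y = 0\<^sub>m N N" using assms(1) by (intro eq_matI) auto
  then show False using assms(2) by auto
qed

lemma peel:
  assumes Y: "Y \<in> g" "\<forall>i<N. \<forall>j<N. Y$$(i,j) \<noteq> 0 \<longrightarrow> \<Phi> i j" and irr: "\<And>i. \<not> \<Phi> i i"
    and P0: "P (0\<^sub>m N N)"
    and Pstep: "\<And>C Z a b. C \<in> root_space N g (dif a b) \<Longrightarrow> a < N \<Longrightarrow> b < N \<Longrightarrow> \<Phi> a b \<Longrightarrow> C$$(a,b) \<noteq> 0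
       \<Longrightarrow> (\<forall>i<N. \<forall>j<N. C$$(i,j) \<noteq> 0 \<longrightarrow> \<Phi> i j) \<Longrightarrow> Z \<in> g \<Longrightarrow> (\<forall>i<N. \<forall>j<N. Z$$(i,j) \<noteq> 0 \<longrightarrow> \<Phi> i j)
       \<Longrightarrow> P Z \<Longrightarrow> P (C + Z)"
  shows "P Y"
  using Y
proof (induction "card {(i,j). i < N \<and> j < N \<and> Y$$(i,j) \<noteq> 0}" arbitrary: Y rule: less_induct)
  case less
  have YC: "Y \<in> carrier_mat N N" using less gC by auto
  show ?case
  proof (cases "Y = 0\<^sub>m N N")
    case True then show ?thesis using P0 by simp
  next
    case False
    obtain a b where ab: "a < N" "b < N" "Y$$(a,b) \<noteq> 0" using nz_ex[OF YC False] by blast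
    have Pab: "\<Phi> a b" using less(3) ab by auto
    then have neq: "a \<noteq> b" using irr by auto
    obtain C where C: "C \<in> root_space N g (dif a b)" "C$$(a,b) = Y$$(a,b)"
        "\<forall>i<N. \<forall>j<N. C$$(i,j) = 0 \<or> C$$(i,j) = Y$$(i,j)"
      using comp_rs[OF less(2) ab(1,2) neq] by blast
    have CC: "C \<in> carrier_mat N N" using C(1) rs_g gC by blast
    define Z where "Z = Y + (-1) \<cdot>\<^sub>m C"
    have Zg: "Z \<in> g" unfolding Z_def using g_add g_smult less(2) C(1) rs_g by blast
    have ZC: "Z \<in> carrier_mat N N" using YC CC by (simp add: Z_def)
    have Ze: "\<And>i j. i < N \<Longrightarrow> j < N \<Longrightarrow> Z$$(i,j) = Y$$(i,j) - C$$(i,j)"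
      using YC CC by (simp add: Z_def)
    have YCZ: "Y = C + Z" using YC CC ZC Ze by (intro eq_matI) auto
    have sub: "{(i,j). i < N \<and> j < N \<and> Z$$(i,j) \<noteq> 0} \<subseteq> {(i,j). i < N \<and> j < N \<and> Y$$(i,j) \<noteq> 0} - {(a,b)}"
    proof
      fix p assume p: "p \<in> {(i,j). i < N \<and> j < N \<and> Z$$(i,j) \<noteq> 0}"
      obtain i j where ij: "p = (i,j)" "i < N" "j < N" "Z$$(i,j) \<noteq> 0" using p by auto
      have "C$$(i,j) = 0 \<or> C$$(i,j) = Y$$(i,j)" using C(3) ij by auto
      then have "Y$$(i,j) \<noteq> 0" using Ze ij by auto
      moreover have "(i,j) \<noteq> (a,b)" using Ze ab C(2) ij by auto
      ultimately show "p \<in> {(i,j). i < N \<and> j < N \<and> Y$$(i,j) \<noteq> 0} - {(a,b)}" using ij by auto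
    qed
    have fin: "finite {(i,j). i < N \<and> j < N \<and> Y$$(i,j) \<noteq> 0}"
      by (rule finite_subset[of _ "{..<N} \<times> {..<N}"]) auto
    have lt: "card {(i,j). i < N \<and> j < N \<and> Z$$(i,j) \<noteq> 0} < card {(i,j). i < N \<and> j < N \<and> Y$$(i,j) \<noteq> 0}"
    proof -
      have "card {(i,j). i < N \<and> j < N \<and> Z$$(i,j) \<noteq> 0} \<le> card ({(i,j). i < N \<and> j < N \<and> Y$$(i,j) \<noteq> 0} - {(a,b)})"
        using sub fin by (intro card_mono) auto
      also have "\<dots> < card {(i,j). i < N \<and> j < N \<and> Y$$(i,j) \<noteq> 0}"
        using fin ab by (intro card_Diff1_less) auto
      finally show ?thesis .
    qed
    have Zs: "\<forall>i<N. \<forall>j<N. Z$$(i,j) \<noteq> 0 \<longrightarrow> \<Phi> i j" using sub less(3) by blast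
    have Cs: "\<forall>i<N. \<forall>j<N. C$$(i,j) \<noteq> 0 \<longrightarrow> \<Phi> i j" using C(3) less(3) by metis
    have "P Z" using less(1)[OF lt Zg Zs] .
    then have "P (C + Z)" using Pstep[OF C(1) ab(1,2) Pab _ Cs Zg Zs] C(2) ab(3) by auto
    then show ?thesis using YCZ by simp
  qed
qed

lemma levi_g: "X \<in> levi N g R \<Longrightarrow> X \<in> g"
  unfolding levi_def
  by (induction rule: mat_span.induct) (auto intro: g_zero g_add g_smult g_br rs_g)

lemma cartan_rs0: assumes Z: "Z \<in> cartan N g" shows "Z \<in> root_space N g (\<lambda>H. 0)"
  unfolding rs_iff
proof (intro conjI ballI allI impI)
  show "Z \<in> g" using cartan_g Z by blast
  fix H i j assume "H \<in> cartan N g" "i < N" "j < N"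
  show "dif i j H * Z $$ (i, j) = 0 * Z $$ (i, j)"
  proof (cases "i = j")
    case True then show ?thesis by (simp add: dif_def)
  next
    case False then show ?thesis using cartan_d[OF Z] \<open>i < N\<close> \<open>j < N\<close> by simp
  qed
qed

end

locale clsrep = clsR +
  fixes m :: nat and \<rho> :: "nat \<Rightarrow> complex mat \<Rightarrow> complex mat" and w :: "complex vec"
    and lam :: "complex mat \<Rightarrow> complex"
  assumes rep: "current_rep N g m \<rho>"
  and wW: "w \<in> weight_space N g m \<rho> lam"
  and cyc: "cyclic_sub m \<rho> (nneg N g) w = carrier_vec m"
begin

abbreviation "M \<equiv> Mset N g \<rho> w lam"

lemma rho_C: "X \<in> g \<Longrightarrow> \<rho> k X \<in> carrier_mat m m" using rep by (auto simp: current_rep_def)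
lemma rho_add: "X \<in> g \<Longrightarrow> Y \<in> g \<Longrightarrow> \<rho> k (X + Y) = \<rho> k X + \<rho> k Y" using rep by (auto simp: current_rep_def)
lemma rho_smult: "X \<in> g \<Longrightarrow> \<rho> k (c \<cdot>\<^sub>m X) = c \<cdot>\<^sub>m \<rho> k X" using rep by (auto simp: current_rep_def)
lemma rho_br: "X \<in> g \<Longrightarrow> Y \<in> g \<Longrightarrow> \<rho> (k + l) (lie_br X Y) = lie_br (\<rho> k X) (\<rho> l Y)"
  using rep by (auto simp: current_rep_def)

lemma rho_zero: "\<rho> k (0\<^sub>m N N) = 0\<^sub>m m m"
proof -
  have "0\<^sub>m N N = (0::complex) \<cdot>\<^sub>m 0\<^sub>m N N" by (intro eq_matI) auto
  then have "\<rho> k (0\<^sub>m N N) = 0 \<cdot>\<^sub>m \<rho> k (0\<^sub>m N N)" using rho_smult[OF g_zero] by metis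
  moreover have C: "\<rho> k (0\<^sub>m N N) \<in> carrier_mat m m" using rho_C[OF g_zero] .
  ultimately show ?thesis
  proof (intro eq_matI)
    fix i j assume "i < dim_row (0\<^sub>m m m :: complex mat)" "j < dim_col (0\<^sub>m m m :: complex mat)"
    then have ij: "i < m" "j < m" by auto
    assume e: "\<rho> k (0\<^sub>m N N) = 0 \<cdot>\<^sub>m \<rho> k (0\<^sub>m N N)"
    have "\<rho> k (0\<^sub>m N N) $$ (i,j) = (0 \<cdot>\<^sub>m \<rho> k (0\<^sub>m N N)) $$ (i,j)" using e by metis
    also have "\<dots> = 0" using C ij by simp
    finally show "\<rho> k (0\<^sub>m N N) $$ (i,j) = 0\<^sub>m m m $$ (i,j)" using ij by simp
  qed auto
qed

lemma mat_vec_zero: "A \<in> carrier_mat m m \<Longrightarrow> A *\<^sub>v 0\<^sub>v m = 0\<^sub>v m"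
  by (intro eq_vecI) auto

lemma w_C: "w \<in> carrier_vec m" using wW by (auto simp: weight_space_def)
lemma w_eig: "H \<in> cartan N g \<Longrightarrow> \<rho> 0 H *\<^sub>v w = lam H \<cdot>\<^sub>v w" using wW by (auto simp: weight_space_def)

lemma act_zero: "u \<in> carrier_vec m \<Longrightarrow> \<rho> k (0\<^sub>m N N) *\<^sub>v u = 0\<^sub>v m"
  unfolding rho_zero by (auto intro!: eq_vecI)

lemma comm_vec: assumes X: "X \<in> g" and Y: "Y \<in> g" and u: "u \<in> carrier_vec m"
  shows "\<rho> k X *\<^sub>v (\<rho> l Y *\<^sub>v u) = \<rho> l Y *\<^sub>v (\<rho> k X *\<^sub>v u) + \<rho> (k+l) (lie_br X Y) *\<^sub>v u"
proof -
  have A: "\<rho> k X \<in> carrier_mat m m" and B: "\<rho> l Y \<in> carrier_mat m m" using rho_C X Y by auto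
  have h: "\<rho> (k+l) (lie_br X Y) = \<rho> k X * \<rho> l Y - \<rho> l Y * \<rho> k X"
    using rho_br[OF X Y, of k l] by (simp add: lie_br_def)
  have "\<rho> (k+l) (lie_br X Y) *\<^sub>v u = (\<rho> k X * \<rho> l Y) *\<^sub>v u - (\<rho> l Y * \<rho> k X) *\<^sub>v u"
    unfolding h using A B u by (subst minus_mult_distrib_mat_vec) auto
  also have "\<dots> = \<rho> k X *\<^sub>v (\<rho> l Y *\<^sub>v u) - \<rho> l Y *\<^sub>v (\<rho> k X *\<^sub>v u)" using A B u by simp
  finally show ?thesis using A B u by (auto intro!: eq_vecI)
qed

lemma weight_shift: assumes H: "H \<in> cartan N g" and u: "u \<in> carrier_vec m" and e: "\<rho> 0 H *\<^sub>v u = c \<cdot>\<^sub>v u"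
  and Y: "Y \<in> root_space N g \<gamma>"
  shows "\<rho> 0 H *\<^sub>v (\<rho> k Y *\<^sub>v u) = (c + \<gamma> H) \<cdot>\<^sub>v (\<rho> k Y *\<^sub>v u)"
proof -
  have Yg: "Y \<in> g" using rs_g Y by auto
  have br: "lie_br H Y = \<gamma> H \<cdot>\<^sub>m Y" using Y H by (auto simp: root_space_def)
  have B: "\<rho> k Y \<in> carrier_mat m m" using rho_C Yg by auto
  have "\<rho> 0 H *\<^sub>v (\<rho> k Y *\<^sub>v u) = \<rho> k Y *\<^sub>v (\<rho> 0 H *\<^sub>v u) + \<rho> k (\<gamma> H \<cdot>\<^sub>m Y) *\<^sub>v u"
    using comm_vec[OF cartan_g[OF H] Yg u, of 0 k] br by simp
  also have "\<dots> = c \<cdot>\<^sub>v (\<rho> k Y *\<^sub>v u) + \<gamma> H \<cdot>\<^sub>v (\<rho> k Y *\<^sub>v u)"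
    unfolding e rho_smult[OF Yg] using B u by (auto simp: mult_mat_vec)
  finally show ?thesis using B u by (auto intro!: eq_vecI simp: algebra_simps)
qed

lemma parts_act: assumes X: "X \<in> g" and u: "u \<in> carrier_vec m"
  shows "\<rho> k X *\<^sub>v u = \<rho> k (up_part N X) *\<^sub>v u + \<rho> k (dg_part N X) *\<^sub>v u + \<rho> k (lo_part N X) *\<^sub>v u"
proof -
  have g3: "up_part N X \<in> g" "dg_part N X \<in> g" "lo_part N X \<in> g" using g_up g_dg g_lo X by auto
  have e: "\<rho> k X = \<rho> k (up_part N X) + \<rho> k (dg_part N X) + \<rho> k (lo_part N X)"
    using parts_sum[OF gC[OF X]] rho_add g3 g_add by metis
  have C3: "\<rho> k (up_part N X) \<in> carrier_mat m m" "\<rho> k (dg_part N X) \<in> carrier_mat m m"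
     "\<rho> k (lo_part N X) \<in> carrier_mat m m" using rho_C g3 by auto
  have C12: "\<rho> k (up_part N X) + \<rho> k (dg_part N X) \<in> carrier_mat m m" using C3 by simp
  show ?thesis unfolding e add_mult_distrib_mat_vec[OF C12 C3(3) u] add_mult_distrib_mat_vec[OF C3(1,2) u] ..
qed

lemma M_wt: "(u,\<beta>) \<in> M \<Longrightarrow> u \<in> carrier_vec m \<and> (\<forall>H\<in>cartan N g. \<rho> 0 H *\<^sub>v u = \<beta> H \<cdot>\<^sub>v u)"
proof (induction rule: Mset.induct)
  case gen then show ?case using w_C w_eig by auto
next
  case (act u \<beta> Y \<gamma> k)
  have Yg: "Y \<in> g" using act rs_g by auto
  have uC: "u \<in> carrier_vec m" using act by auto
  have "\<rho> k Y *\<^sub>v u \<in> carrier_vec m" using rho_C[OF Yg, of k] uC by (rule mult_mat_vec_carrier)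
  moreover have "\<forall>H\<in>cartan N g. \<rho> 0 H *\<^sub>v (\<rho> k Y *\<^sub>v u) = (\<beta> H + \<gamma> H) \<cdot>\<^sub>v (\<rho> k Y *\<^sub>v u)"
    using weight_shift[OF _ uC _ act(3)] act(5) by auto
  ultimately show ?case by auto
qed

lemma M_H0: "(u,\<beta>) \<in> M \<Longrightarrow> \<exists>r::nat. \<beta> (H0 N) = lam (H0 N) - of_nat r \<and> (r = 0 \<longrightarrow> u = w)"
proof (induction rule: Mset.induct)
  case gen then show ?case by auto
next
  case (act u \<beta> Y \<gamma> k)
  obtain r where r: "\<beta> (H0 N) = lam (H0 N) - of_nat r" using act by auto
  obtain a b where ab: "b < a" "a < N" "Y$$(a,b) \<noteq> 0" using nneg_entry[OF act(2,4)] by blast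
  have "\<gamma> (H0 N) = dif a b (H0 N)" using rs_entry[OF act(3)] ab H0_cartan by (auto simp: feq_def)
  also have "\<dots> = - of_nat (a - b)" using H0_dif ab by (simp add: of_nat_diff)
  finally show ?case using r ab by (intro exI[of _ "r + (a - b)"]) auto
qed

lemma lower_prp: assumes "Y \<in> g" "b < a" "a < N" "Y$$(a,b) \<noteq> 0" shows "prp N g b a"
  using assms g_tr[OF assms(1)] gC[OF assms(1)] unfolding prp_def
  by (intro conjI bexI[of _ "Y\<^sup>T"]) auto

lemma M_H1: "(u,\<beta>) \<in> M \<Longrightarrow> \<exists>r::nat. \<beta> H1 = lam H1 - of_nat r \<and> (r = 0 \<longrightarrow> u \<in> cyclic_sub m \<rho> (levi N g R') w)"
proof (induction rule: Mset.induct)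
  case gen then show ?case by (auto intro: cyclic_sub.gen)
next
  case (act u \<beta> Y \<gamma> k)
  obtain r where r: "\<beta> H1 = lam H1 - of_nat r" "r = 0 \<longrightarrow> u \<in> cyclic_sub m \<rho> (levi N g R') w" using act by auto
  obtain a b where ab: "b < a" "a < N" "Y$$(a,b) \<noteq> 0" using nneg_entry[OF act(2,4)] by blast
  have Yg: "Y \<in> g" using act rs_g by auto
  have pba: "prp N g b a" using lower_prp[OF Yg ab] .
  obtain n where n: "dif b a H1 = of_nat n" using propA[OF pba] by blast
  have fg: "feq N g (dif a b) \<gamma>" using rs_entry[OF act(3)] ab by auto
  have "\<gamma> H1 = - dif b a H1" using fg H1(1) by (auto simp: feq_def dif_def)
  then have g1: "\<gamma> H1 = - of_nat n" using n by simp
  show ?case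
  proof (intro exI[of _ "r + n"] conjI impI)
    show "\<beta> H1 + \<gamma> H1 = lam H1 - of_nat (r + n)" using r g1 by simp
  next
    assume z: "r + n = 0"
    then have u: "u \<in> cyclic_sub m \<rho> (levi N g R') w" using r by auto
    have "dif b a H1 = 0" using n z by simp
    then obtain \<rho>' where rr: "\<rho>' \<in> R'" "feq N g \<rho>' (dif b a)"
      using propC[OF prp_pos[OF pba]] by blast
    have "feq N g (\<lambda>H. - \<rho>' H) \<gamma>" using rr(2) fg by (auto simp: feq_def dif_def)
    then have "Y \<in> root_space N g (\<lambda>H. - \<rho>' H)" using rs_feq act(3) by blast
    moreover have "(\<lambda>H. - \<rho>' H) \<in> R'" using R'_neg rr(1) by blast
    ultimately have "Y \<in> levi N g R'" unfolding levi_def by (blast intro: mat_span.base)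
    then show "\<rho> k Y *\<^sub>v u \<in> cyclic_sub m \<rho> (levi N g R') w" using u by (rule cyclic_sub.act)
  qed
qed

lemma M_act_nneg: assumes uM: "(u,\<beta>) \<in> M" and Y: "Y \<in> nneg N g"
  shows "\<rho> k Y *\<^sub>v u \<in> vspan m (fst ` M)"
proof -
  have uC: "u \<in> carrier_vec m" using M_wt[OF uM] by auto
  have Yg: "Y \<in> g" using Y by (auto simp: nneg_def)
  have Ys: "\<forall>i<N. \<forall>j<N. Y$$(i,j) \<noteq> 0 \<longrightarrow> j < i"
  proof (intro allI impI)
    fix i j assume ij: "i < N" "j < N" "Y$$(i,j) \<noteq> 0"
    show "j < i"
    proof (rule ccontr)
      assume "\<not> j < i"
      then have "i \<le> j" by simp
      then show False using Y ij unfolding nneg_def by auto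
    qed
  qed
  show ?thesis
  proof (rule peel[OF Yg Ys, where P = "\<lambda>Z. \<rho> k Z *\<^sub>v u \<in> vspan m (fst ` M)"])
    show "\<rho> k (0\<^sub>m N N) *\<^sub>v u \<in> vspan m (fst ` M)" using act_zero[OF uC] by (simp add: vspan.zero)
  next
    fix C Z a b
    assume C: "C \<in> root_space N g (dif a b)" "a < N" "b < N" "b < a" "C$$(a,b) \<noteq> 0"
      "\<forall>i<N. \<forall>j<N. C$$(i,j) \<noteq> 0 \<longrightarrow> j < i" and Z: "Z \<in> g" "\<forall>i<N. \<forall>j<N. Z$$(i,j) \<noteq> 0 \<longrightarrow> j < i"
      and PZ: "\<rho> k Z *\<^sub>v u \<in> vspan m (fst ` M)"
    have Cg: "C \<in> g" using C rs_g by auto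
    have "\<forall>i<N. \<forall>j<N. i \<le> j \<longrightarrow> C$$(i,j) = 0" using C(6) by (meson leD)
    then have Cn: "C \<in> nneg N g" using Cg by (simp add: nneg_def)
    have "C \<noteq> 0\<^sub>m N N" using C by auto
    then have "(\<rho> k C *\<^sub>v u, \<lambda>H. \<beta> H + dif a b H) \<in> M" using Mset.act[OF uM Cn C(1)] by blast
    then have "\<rho> k C *\<^sub>v u \<in> vspan m (fst ` M)" by (force intro: vspan.base)
    moreover have "\<rho> k (C + Z) *\<^sub>v u = \<rho> k C *\<^sub>v u + \<rho> k Z *\<^sub>v u"
      using rho_add[OF Cg Z(1)] add_mult_distrib_mat_vec[OF rho_C[OF Cg, of k] rho_C[OF Z(1), of k] uC] by simp
    ultimately show "\<rho> k (C + Z) *\<^sub>v u \<in> vspan m (fst ` M)" using PZ by (simp add: vspan.add)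
  qed auto
qed

lemma M_C: "fst ` M \<subseteq> carrier_vec m" using M_wt by force

lemma vspan_act_nneg: assumes v: "v \<in> vspan m (fst ` M)" and Y: "Y \<in> nneg N g"
  shows "\<rho> k Y *\<^sub>v v \<in> vspan m (fst ` M)"
  using v
proof (induction rule: vspan.induct)
  case zero
  have Yg: "Y \<in> g" using Y by (auto simp: nneg_def)
  have "\<rho> k Y *\<^sub>v 0\<^sub>v m = 0\<^sub>v m" using rho_C[OF Yg] by (rule mat_vec_zero)
  then show ?case by (simp add: vspan.zero)
next
  case (base v) then show ?case using M_act_nneg Y by force
next
  case (add u v)
  have Yg: "Y \<in> g" using Y by (auto simp: nneg_def)
  have c: "u \<in> carrier_vec m" "v \<in> carrier_vec m" using add(1,2) vspan_carrier M_C by blast+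
  then show ?case using add mult_add_distrib_mat_vec[OF rho_C[OF Yg, of k] c(1) c(2)] by (simp add: vspan.add)
next
  case (smult u c)
  have Yg: "Y \<in> g" using Y by (auto simp: nneg_def)
  have uC: "u \<in> carrier_vec m" using smult(1) vspan_carrier M_C by blast
  show ?case unfolding mult_mat_vec[OF rho_C[OF Yg, of k] uC] using smult(2) by (rule vspan.smult)
qed

lemma W_span: "v \<in> carrier_vec m \<Longrightarrow> v \<in> vspan m (fst ` M)"
proof -
  assume "v \<in> carrier_vec m"
  then have "v \<in> cyclic_sub m \<rho> (nneg N g) w" using cyc by simp
  then show ?thesis
  proof (induction rule: cyclic_sub.induct)
    case gen then show ?case by (force intro: vspan.base Mset.gen)
  next case zero then show ?case by (rule vspan.zero)
  next case (add u v) then show ?case by (blast intro: vspan.add)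
  next case (smult u c) then show ?case by (blast intro: vspan.smult)
  next case (act X u k) then show ?case using vspan_act_nneg by blast
  qed
qed

end

definition Eij :: "nat \<Rightarrow> nat \<Rightarrow> nat \<Rightarrow> complex mat" where
  "Eij N a b = mat N N (\<lambda>(i,j). if i = a \<and> j = b then 1 else 0)"

lemma sl_mem: "X \<in> sl_alg N \<longleftrightarrow> X \<in> carrier_mat N N \<and> (\<Sum>i<N. X$$(i,i)) = 0"
  by (auto simp: sl_alg_def mtrace_def)

lemma tr_comm: fixes X Y :: "complex mat" assumes X: "X \<in> carrier_mat N N" and Y: "Y \<in> carrier_mat N N"
  shows "(\<Sum>i<N. (X*Y)$$(i,i)) = (\<Sum>i<N. (Y*X)$$(i,i))"
proof -
  have "(\<Sum>i<N. (X*Y)$$(i,i)) = (\<Sum>i<N. \<Sum>k<N. X$$(i,k) * Y$$(k,i))"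
    using mult_entry[OF X Y] by simp
  also have "\<dots> = (\<Sum>i<N. \<Sum>k<N. Y $$ (k, i) * X $$ (i, k))"
    by (rule sum.cong[OF refl], rule sum.cong[OF refl], rule mult.commute)
  also have "\<dots> = (\<Sum>k<N. \<Sum>i<N. Y $$ (k, i) * X $$ (i, k))" by (rule sum.swap)
  also have "\<dots> = (\<Sum>k<N. (Y*X)$$(k,k))" using mult_entry[OF Y X] by simp
  finally show ?thesis .
qed

lemma sl_cls: assumes N: "N \<ge> 2" shows "cls N (sl_alg N) (\<lambda>a b. b = Suc a \<and> Suc a < N)"
proof -
  have E: "Eij N a b \<in> sl_alg N" if "a \<noteq> b" for a b
    using that by (auto simp: sl_mem Eij_def intro!: sum.neutral)
  have Eab: "a < N \<Longrightarrow> b < N \<Longrightarrow> Eij N a b $$ (a,b) = 1" for a b by (simp add: Eij_def)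
  have prp_sl: "prp N (sl_alg N) a b" if "a < b" "b < N" for a b
    unfolding prp_def using that E[of a b] Eab[of a b] by (intro conjI bexI[of _ "Eij N a b"]) auto
  show ?thesis
  proof (unfold_locales)
    show "sl_alg N \<subseteq> carrier_mat N N" by (auto simp: sl_mem)
  next
    show "0\<^sub>m N N \<in> sl_alg N" by (auto simp: sl_mem)
  next
    fix X Y assume "X \<in> sl_alg N" "Y \<in> sl_alg N"
    then show "X + Y \<in> sl_alg N" by (auto simp: sl_mem sum.distrib)
  next
    fix X and c :: complex assume "X \<in> sl_alg N"
    then show "c \<cdot>\<^sub>m X \<in> sl_alg N" by (auto simp: sl_mem sum_distrib_left[symmetric])
  next
    fix X Y assume X: "X \<in> sl_alg N" and Y: "Y \<in> sl_alg N"
    then have XC: "X \<in> carrier_mat N N" and YC: "Y \<in> carrier_mat N N" by (auto simp: sl_mem)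
    have "(\<Sum>i<N. lie_br X Y $$(i,i)) = (\<Sum>i<N. (X*Y)$$(i,i)) - (\<Sum>i<N. (Y*X)$$(i,i))"
      using XC YC by (simp add: lie_br_def sum_subtractf)
    then show "lie_br X Y \<in> sl_alg N" using tr_comm[OF XC YC] XC YC by (auto simp: sl_mem lie_br_def)
  next
    fix X assume "X \<in> sl_alg N" then show "X\<^sup>T \<in> sl_alg N" by (auto simp: sl_mem)
  next
    fix X assume "X \<in> sl_alg N" then show "up_part N X \<in> sl_alg N" by (auto simp: sl_mem up_part_def)
  next
    fix X assume "X \<in> sl_alg N" then show "dg_part N X \<in> sl_alg N" by (auto simp: sl_mem dg_part_def)
  next
    have "(\<Sum>i<N. ((of_nat N - 1)/2 - of_nat i :: complex)) = 0"
    proof -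
      have g: "2 * (\<Sum>i<n. of_nat i :: complex) = of_nat n * (of_nat n - 1)" for n
        by (induction n) (auto simp: algebra_simps)
      have "(\<Sum>i<N. ((of_nat N - 1)/2 - of_nat i :: complex)) = of_nat N * (of_nat N - 1)/2 - (\<Sum>i<N. of_nat i)"
        by (simp add: sum_subtractf)
      also have "\<dots> = 0" using g[of N] by (simp add: field_simps)
      finally show ?thesis .
    qed
    then show "H0 N \<in> sl_alg N" by (auto simp: sl_mem H0_def)
  next
    fix Y a b assume Y: "Y \<in> sl_alg N" and ab: "a < N" "b < N" "a \<noteq> b"
    define C where "C = Y$$(a,b) \<cdot>\<^sub>m Eij N a b"
    have "C \<in> sl_alg N" using ab by (auto simp: C_def sl_mem Eij_def intro!: sum.neutral)
    moreover have "C$$(a,b) = Y$$(a,b)" using ab by (simp add: C_def Eij_def)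
    moreover have "\<forall>i<N. \<forall>j<N. C$$(i,j) = 0 \<or> C$$(i,j) = Y$$(i,j)" by (auto simp: C_def Eij_def)
    moreover have "\<forall>i<N. \<forall>j<N. C$$(i,j) \<noteq> 0 \<longrightarrow> feq N (sl_alg N) (dif i j) (dif a b)"
      by (auto simp: C_def Eij_def feq_def)
    ultimately show "\<exists>C\<in>sl_alg N. C$$(a,b) = Y$$(a,b) \<and>
       (\<forall>i<N. \<forall>j<N. C$$(i,j) = 0 \<or> C$$(i,j) = Y$$(i,j)) \<and>
       (\<forall>i<N. \<forall>j<N. C$$(i,j) \<noteq> 0 \<longrightarrow> feq N (sl_alg N) (dif i j) (dif a b))" by blast
  next
    fix a b assume "b = Suc a \<and> Suc a < N" then show "prp N (sl_alg N) a b" using prp_sl by auto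
  next
    fix a b assume p: "prp N (sl_alg N) a b"
    then have ab: "a < b" "b < N" by (auto simp: prp_def)
    show "(b = Suc a \<and> Suc a < N) \<or> (\<exists>c d e f. prp N (sl_alg N) c d \<and> (f = Suc e \<and> Suc e < N) \<and> d - c < b - a \<and>
            feq N (sl_alg N) (dif a b) (\<lambda>H. dif c d H + dif e f H))"
    proof (cases "b = Suc a")
      case True then show ?thesis using ab by auto
    next
      case False
      then have "a < b - 1" using ab by auto
      then show ?thesis using ab prp_sl[of a "b - 1"]
        by (intro disjI2 exI[of _ a] exI[of _ "b - 1"] exI[of _ "b - 1"] exI[of _ b]) (auto simp: feq_def dif_def)
    qed
  next
    fix P :: "nat \<Rightarrow> nat \<Rightarrow> bool"
    define t where "t k = (if P k (Suc k) then 0 else 1 :: complex)" for k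
    define s where "s i = (\<Sum>k<i. t k)" for i
    define c where "c = (\<Sum>i<N. s i) / of_nat N"
    define H where "H = mat N N (\<lambda>(i,j). if i = j then c - s i else 0)"
    have "(\<Sum>i<N. c - s i) = 0" using N by (simp add: sum_subtractf c_def)
    then have "H \<in> cartan N (sl_alg N)" by (auto simp: H_def cartan_def sl_mem)
    moreover have "\<forall>a b. b = Suc a \<and> Suc a < N \<longrightarrow> dif a b H = (if P a b then 0 else 1)"
      by (auto simp: H_def dif_def s_def t_def)
    ultimately show "\<exists>H\<in>cartan N (sl_alg N). \<forall>a b. b = Suc a \<and> Suc a < N \<longrightarrow> dif a b H = (if P a b then 0 else 1)"
      by blast
  qed
qed


context clsrep begin

definition gneg :: "complex mat set" where
  "gneg = {Y. Y \<in> nneg N g \<and> (\<exists>\<gamma>\<in>R'. Y \<in> root_space N g \<gamma>)}"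

abbreviation "T \<equiv> cyclic_sub m \<rho> gneg w"

lemma cyc_C: "L \<subseteq> g \<Longrightarrow> u \<in> cyclic_sub m \<rho> L w \<Longrightarrow> u \<in> carrier_vec m"
proof -
  assume L: "L \<subseteq> g" and u: "u \<in> cyclic_sub m \<rho> L w"
  from u show ?thesis
  proof (induction rule: cyclic_sub.induct)
    case gen then show ?case using w_C by simp
  next case zero then show ?case by simp
  next case (add u v) then show ?case by simp
  next case (smult u c) then show ?case by simp
  next case (act X u k) then show ?case using rho_C[of X k] L by (auto intro: mult_mat_vec_carrier)
  qed
qed

lemma rs_H0: assumes "X \<in> root_space N g \<alpha>" "i < N" "j < N" "X$$(i,j) \<noteq> 0"
  shows "\<alpha> (H0 N) = of_nat j - of_nat i"
proof -
  have "feq N g (dif i j) \<alpha>" using rs_entry[OF assms] .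
  then have "dif i j (H0 N) = \<alpha> (H0 N)" using H0_cartan by (auto simp: feq_def)
  then show ?thesis using H0_dif assms(2,3) by simp
qed

lemma smult_mat_vec: assumes A: "(A::complex mat) \<in> carrier_mat m' n" and v: "v \<in> carrier_vec n"
  shows "(c \<cdot>\<^sub>m A) *\<^sub>v v = c \<cdot>\<^sub>v (A *\<^sub>v v)"
  using A v by (intro eq_vecI) (auto simp: scalar_prod_def sum_distrib_left algebra_simps)

lemma gneg_g: "gneg \<subseteq> g" by (auto simp: gneg_def nneg_def)
lemma T_C: "u \<in> T \<Longrightarrow> u \<in> carrier_vec m" using cyc_C[OF gneg_g] by blast

lemma B1: assumes X: "X \<in> root_space N g \<alpha>" "X \<in> npos N g" shows "\<rho> k X *\<^sub>v w = 0\<^sub>v m"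
proof (cases "X = 0\<^sub>m N N")
  case True then show ?thesis using act_zero w_C by simp
next
  case False
  obtain a b where ab: "a < b" "b < N" "X$$(a,b) \<noteq> 0" using npos_entry[OF X(2) False] by blast
  have aH0: "\<alpha> (H0 N) = of_nat b - of_nat a" using rs_H0[OF X(1)] ab by auto
  have Xg: "X \<in> g" using X rs_g by auto
  define v where "v = \<rho> k X *\<^sub>v w"
  have vC: "v \<in> carrier_vec m" unfolding v_def using rho_C[OF Xg] w_C by (rule mult_mat_vec_carrier)
  have ev: "\<rho> 0 (H0 N) *\<^sub>v v = (lam (H0 N) + \<alpha> (H0 N)) \<cdot>\<^sub>v v"
    unfolding v_def by (rule weight_shift[OF H0_cartan w_C w_eig[OF H0_cartan] X(1)])
  define P where "P = (\<lambda>(u,\<beta>). (u, \<beta> (H0 N))) ` M"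
  have fP: "fst ` P = fst ` M" unfolding P_def by force
  have Pe: "\<And>u c. (u,c) \<in> P \<Longrightarrow> u \<in> carrier_vec m \<and> \<rho> 0 (H0 N) *\<^sub>v u = c \<cdot>\<^sub>v u"
    unfolding P_def using M_wt H0_cartan by auto
  have "v \<in> vspan m (fst ` P)" using W_span[OF vC] fP by simp
  then have "v \<in> vspan m (fst ` {p\<in>P. snd p = lam (H0 N) + \<alpha> (H0 N)})"
    using eig_proj[OF rho_C[OF cartan_g[OF H0_cartan], of 0] Pe _ ev] by blast
  moreover have "{p\<in>P. snd p = lam (H0 N) + \<alpha> (H0 N)} = {}"
  proof -
    have False if uM: "(u,\<beta>) \<in> M" "\<beta> (H0 N) = lam (H0 N) + \<alpha> (H0 N)" for u \<beta>
    proof -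
      obtain r where "\<beta> (H0 N) = lam (H0 N) - of_nat r" using M_H0[OF uM(1)] by blast
      then have "(of_nat (r + b) :: complex) = of_nat a" using uM(2) aH0 by (simp add: algebra_simps)
      then have "r + b = a" using of_nat_eq_iff by blast
      then show False using ab by auto
    qed
    then show ?thesis unfolding P_def by auto
  qed
  ultimately have "v \<in> vspan m {}" by simp
  then show ?thesis unfolding v_def by (induction rule: vspan.induct) auto
qed

lemma span_w_T: "v \<in> vspan m {w} \<Longrightarrow> v \<in> T"
  by (induction rule: vspan.induct) (auto intro: cyclic_sub.intros)

lemma B2: assumes Z: "Z \<in> cartan N g" shows "\<rho> k Z *\<^sub>v w \<in> T"
proof -
  have Zg: "Z \<in> g" using cartan_g Z by auto
  define v where "v = \<rho> k Z *\<^sub>v w"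
  have vC: "v \<in> carrier_vec m" unfolding v_def using rho_C[OF Zg] w_C by (rule mult_mat_vec_carrier)
  have ev: "\<rho> 0 (H0 N) *\<^sub>v v = (lam (H0 N) + 0) \<cdot>\<^sub>v v"
    unfolding v_def by (rule weight_shift[OF H0_cartan w_C w_eig[OF H0_cartan] cartan_rs0[OF Z]])
  define P where "P = (\<lambda>(u,\<beta>). (u, \<beta> (H0 N))) ` M"
  have fP: "fst ` P = fst ` M" unfolding P_def by force
  have Pe: "\<And>u c. (u,c) \<in> P \<Longrightarrow> u \<in> carrier_vec m \<and> \<rho> 0 (H0 N) *\<^sub>v u = c \<cdot>\<^sub>v u"
    unfolding P_def using M_wt H0_cartan by auto
  have "v \<in> vspan m (fst ` P)" using W_span[OF vC] fP by simp
  then have "v \<in> vspan m (fst ` {p\<in>P. snd p = lam (H0 N) + 0})"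
    using eig_proj[OF rho_C[OF cartan_g[OF H0_cartan], of 0] Pe _ ev] by blast
  moreover have "fst ` {p\<in>P. snd p = lam (H0 N) + 0} \<subseteq> {w}"
  proof -
    have "u = w" if uM: "(u,\<beta>) \<in> M" "\<beta> (H0 N) = lam (H0 N)" for u \<beta>
    proof -
      obtain r where "\<beta> (H0 N) = lam (H0 N) - of_nat r" "r = 0 \<longrightarrow> u = w" using M_H0[OF uM(1)] by blast
      then show ?thesis using uM(2) by auto
    qed
    then show ?thesis unfolding P_def by auto
  qed
  ultimately have "v \<in> vspan m {w}" using vspan_mono by blast
  then show ?thesis unfolding v_def by (rule span_w_T)
qed

lemma up_root: assumes U: "U \<in> root_space N g \<alpha>" "U \<in> npos N g" "U \<noteq> 0\<^sub>m N N"
  shows "is_root N g \<alpha>"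
proof -
  obtain a b where ab: "a < b" "b < N" "U$$(a,b) \<noteq> 0" using npos_entry[OF U(2,3)] by blast
  have "\<alpha> (H0 N) = of_nat b - of_nat a" using rs_H0[OF U(1)] ab by auto
  then have "\<alpha> (H0 N) \<noteq> 0" using ab by simp
  then show ?thesis unfolding is_root_def using U H0_cartan by blast
qed

lemma lo_root: assumes U: "U \<in> root_space N g \<alpha>" "U \<in> nneg N g" "U \<noteq> 0\<^sub>m N N"
  shows "is_root N g \<alpha>"
proof -
  obtain a b where ab: "b < a" "a < N" "U$$(a,b) \<noteq> 0" using nneg_entry[OF U(2,3)] by blast
  have "\<alpha> (H0 N) = of_nat b - of_nat a" using rs_H0[OF U(1)] ab by auto
  then have "\<alpha> (H0 N) \<noteq> 0" using ab by simp
  then show ?thesis unfolding is_root_def using U H0_cartan by blast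
qed

lemma up_npos: "X \<in> g \<Longrightarrow> up_part N X \<in> npos N g"
  using g_up by (auto simp: npos_def up_part_def)
lemma lo_nneg: "X \<in> g \<Longrightarrow> lo_part N X \<in> nneg N g"
  using g_lo by (auto simp: nneg_def lo_part_def)

lemma pbw: "u \<in> T \<Longrightarrow> (\<forall>k \<alpha> X. \<alpha> \<in> R' \<longrightarrow> X \<in> root_space N g \<alpha> \<longrightarrow> X \<in> npos N g \<longrightarrow> \<rho> k X *\<^sub>v u \<in> T)
    \<and> (\<forall>k Z. Z \<in> cartan N g \<longrightarrow> \<rho> k Z *\<^sub>v u \<in> T)"
proof (induction rule: cyclic_sub.induct)
  case gen
  then show ?case using B1 B2 by (auto intro: cyclic_sub.zero)
next
  case zero
  show ?case
  proof (intro conjI allI impI)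
    fix k \<alpha> X assume "\<alpha> \<in> R'" "X \<in> root_space N g \<alpha>" "X \<in> npos N g"
    then show "\<rho> k X *\<^sub>v 0\<^sub>v m \<in> T" using mat_vec_zero[OF rho_C[OF rs_g[of X \<alpha>], of k]] by (simp add: cyclic_sub.zero)
  next
    fix k Z assume Z: "Z \<in> cartan N g"
    then show "\<rho> k Z *\<^sub>v 0\<^sub>v m \<in> T" using mat_vec_zero[OF rho_C[OF cartan_g[OF Z], of k]] by (simp add: cyclic_sub.zero)
  qed
next
  case (add u v)
  have c: "u \<in> carrier_vec m" "v \<in> carrier_vec m" using add T_C by auto
  show ?case
  proof (intro conjI allI impI)
    fix k \<alpha> X assume "\<alpha> \<in> R'" "X \<in> root_space N g \<alpha>" "X \<in> npos N g"
    then show "\<rho> k X *\<^sub>v (u + v) \<in> T"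
      using add mult_add_distrib_mat_vec[OF rho_C[OF rs_g[of X \<alpha>]] c] by (auto intro: cyclic_sub.add)
  next
    fix k Z assume Z: "Z \<in> cartan N g"
    then show "\<rho> k Z *\<^sub>v (u + v) \<in> T"
      using add mult_add_distrib_mat_vec[OF rho_C[OF cartan_g[OF Z]] c] by (auto intro: cyclic_sub.add)
  qed
next
  case (smult u c)
  have cu: "u \<in> carrier_vec m" using smult T_C by auto
  show ?case
  proof (intro conjI allI impI)
    fix k \<alpha> X assume "\<alpha> \<in> R'" "X \<in> root_space N g \<alpha>" "X \<in> npos N g"
    then show "\<rho> k X *\<^sub>v (c \<cdot>\<^sub>v u) \<in> T"
      using smult mult_mat_vec[OF rho_C[OF rs_g[of X \<alpha>]] cu] by (auto intro: cyclic_sub.smult)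
  next
    fix k Z assume Z: "Z \<in> cartan N g"
    then show "\<rho> k Z *\<^sub>v (c \<cdot>\<^sub>v u) \<in> T"
      using smult mult_mat_vec[OF rho_C[OF cartan_g[OF Z]] cu] by (auto intro: cyclic_sub.smult)
  qed
next
  case (act Y u k1)
  have uC: "u \<in> carrier_vec m" using act T_C by auto
  obtain \<gamma> where Y: "Y \<in> nneg N g" "\<gamma> \<in> R'" "Y \<in> root_space N g \<gamma>" using act(1) by (auto simp: gneg_def)
  have Yg: "Y \<in> g" using Y rs_g by auto
  have IH1: "\<And>k \<alpha> X. \<alpha> \<in> R' \<Longrightarrow> X \<in> root_space N g \<alpha> \<Longrightarrow> X \<in> npos N g \<Longrightarrow> \<rho> k X *\<^sub>v u \<in> T"
    and IH2: "\<And>k Z. Z \<in> cartan N g \<Longrightarrow> \<rho> k Z *\<^sub>v u \<in> T" using act(3) by blast+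
  show ?case
  proof (intro conjI allI impI)
    fix k \<alpha> X assume a: "\<alpha> \<in> R'" and X: "X \<in> root_space N g \<alpha>" "X \<in> npos N g"
    have Xg: "X \<in> g" using X rs_g by auto
    have e: "\<rho> k X *\<^sub>v (\<rho> k1 Y *\<^sub>v u) = \<rho> k1 Y *\<^sub>v (\<rho> k X *\<^sub>v u) + \<rho> (k+k1) (lie_br X Y) *\<^sub>v u"
      by (rule comm_vec[OF Xg Yg uC])
    have t1: "\<rho> k1 Y *\<^sub>v (\<rho> k X *\<^sub>v u) \<in> T" using IH1[OF a X] act(1) by (rule cyclic_sub.act[rotated])
    define B where "B = lie_br X Y"
    have B: "B \<in> root_space N g (\<lambda>H. \<alpha> H + \<gamma> H)" unfolding B_def by (rule jacobi[OF X(1) Y(3)])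
    have Bg: "B \<in> g" using B rs_g by auto
    have up: "\<rho> (k+k1) (up_part N B) *\<^sub>v u \<in> T"
    proof (cases "up_part N B = 0\<^sub>m N N")
      case True then show ?thesis using act_zero[OF uC] by (simp add: cyclic_sub.zero)
    next
      case False
      have "is_root N g (\<lambda>H. \<alpha> H + \<gamma> H)" using up_root[OF rs_up[OF B] up_npos[OF Bg] False] .
      then have "(\<lambda>H. \<alpha> H + \<gamma> H) \<in> R'" using R'_add a Y(2) by blast
      then show ?thesis using IH1 rs_up[OF B] up_npos[OF Bg] by blast
    qed
    have dg: "\<rho> (k+k1) (dg_part N B) *\<^sub>v u \<in> T" using IH2 dg_cartan[OF Bg] by blast
    have lo: "\<rho> (k+k1) (lo_part N B) *\<^sub>v u \<in> T"
    proof (cases "lo_part N B = 0\<^sub>m N N")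
      case True then show ?thesis using act_zero[OF uC] by (simp add: cyclic_sub.zero)
    next
      case False
      have "is_root N g (\<lambda>H. \<alpha> H + \<gamma> H)" using lo_root[OF rs_lo[OF B] lo_nneg[OF Bg] False] .
      then have "(\<lambda>H. \<alpha> H + \<gamma> H) \<in> R'" using R'_add a Y(2) by blast
      then have "lo_part N B \<in> gneg" using rs_lo[OF B] lo_nneg[OF Bg] by (auto simp: gneg_def)
      then show ?thesis using act(2) by (rule cyclic_sub.act)
    qed
    have "\<rho> (k+k1) B *\<^sub>v u \<in> T" unfolding parts_act[OF Bg uC] using up dg lo by (intro cyclic_sub.add)
    then show "\<rho> k X *\<^sub>v (\<rho> k1 Y *\<^sub>v u) \<in> T" unfolding e B_def[symmetric] using t1 by (intro cyclic_sub.add)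
  next
    fix k Z assume Z: "Z \<in> cartan N g"
    have Zg: "Z \<in> g" using cartan_g Z by auto
    have e: "\<rho> k Z *\<^sub>v (\<rho> k1 Y *\<^sub>v u) = \<rho> k1 Y *\<^sub>v (\<rho> k Z *\<^sub>v u) + \<rho> (k+k1) (lie_br Z Y) *\<^sub>v u"
      by (rule comm_vec[OF Zg Yg uC])
    have t1: "\<rho> k1 Y *\<^sub>v (\<rho> k Z *\<^sub>v u) \<in> T" using IH2[OF Z] act(1) by (rule cyclic_sub.act[rotated])
    have br: "lie_br Z Y = \<gamma> Z \<cdot>\<^sub>m Y" using Y(3) Z by (auto simp: root_space_def)
    have "\<rho> (k+k1) (lie_br Z Y) *\<^sub>v u = \<gamma> Z \<cdot>\<^sub>v (\<rho> (k+k1) Y *\<^sub>v u)"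
      unfolding br rho_smult[OF Yg] using rho_C[OF Yg, of "k+k1"] uC by (rule smult_mat_vec)
    moreover have "\<rho> (k+k1) Y *\<^sub>v u \<in> T" using act(1,2) by (rule cyclic_sub.act)
    ultimately have "\<rho> (k+k1) (lie_br Z Y) *\<^sub>v u \<in> T" by (simp add: cyclic_sub.smult)
    then show "\<rho> k Z *\<^sub>v (\<rho> k1 Y *\<^sub>v u) \<in> T" unfolding e using t1 by (intro cyclic_sub.add)
  qed
qed

lemma levi_T: "X \<in> levi N g R' \<Longrightarrow> u \<in> T \<Longrightarrow> \<rho> k X *\<^sub>v u \<in> T"
proof -
  assume X: "X \<in> levi N g R'" and u: "u \<in> T"
  have uC: "u \<in> carrier_vec m" using T_C u by auto
  from X show ?thesis unfolding levi_def
  proof (induction rule: mat_span.induct)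
    case zero then show ?case using act_zero[OF uC] by (simp add: cyclic_sub.zero)
  next
    case (base X)
    then show ?case
    proof
      assume "X \<in> {lie_br X Y |X Y \<alpha>. \<alpha> \<in> R' \<and> X \<in> root_space N g \<alpha> \<and> Y \<in> root_space N g (\<lambda>H. - \<alpha> H)}"
      then obtain X1 Y1 \<alpha> where h: "X = lie_br X1 Y1" "\<alpha> \<in> R'" "X1 \<in> root_space N g \<alpha>"
        "Y1 \<in> root_space N g (\<lambda>H. - \<alpha> H)" by blast
      have B: "X \<in> root_space N g (\<lambda>H. \<alpha> H + - \<alpha> H)" unfolding h(1) by (rule jacobi[OF h(3,4)])
      have "X = dg_part N X" by (rule rs0_dg[OF B]) (simp add: feq_def)
      moreover have "dg_part N X \<in> cartan N g" using dg_cartan rs_g[OF B] by blast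
      ultimately show ?thesis using pbw[OF u] by auto
    next
      assume "X \<in> (\<Union>\<alpha>\<in>R'. root_space N g \<alpha>)"
      then obtain \<alpha> where a: "\<alpha> \<in> R'" "X \<in> root_space N g \<alpha>" by blast
      have Xg: "X \<in> g" using a rs_g by auto
      have up: "\<rho> k (up_part N X) *\<^sub>v u \<in> T" using pbw[OF u] a(1) rs_up[OF a(2)] up_npos[OF Xg] by blast
      have dg: "\<rho> k (dg_part N X) *\<^sub>v u \<in> T" using pbw[OF u] dg_cartan[OF Xg] by blast
      have lo: "\<rho> k (lo_part N X) *\<^sub>v u \<in> T"
      proof -
        have "lo_part N X \<in> gneg" using a rs_lo[OF a(2)] lo_nneg[OF Xg] by (auto simp: gneg_def)
        then show ?thesis using u by (rule cyclic_sub.act)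
      qed
      show ?thesis unfolding parts_act[OF Xg uC] using up dg lo by (intro cyclic_sub.add)
    qed
  next
    case (add X Y)
    have g: "X \<in> g" "Y \<in> g" using add(1,2) levi_g unfolding levi_def by auto
    show ?case using add(3,4) rho_add[OF g] mult_add_distrib_mat_vec uC
        add_mult_distrib_mat_vec[OF rho_C[OF g(1)] rho_C[OF g(2)] uC] by (auto intro: cyclic_sub.add)
  next
    case (smult X c)
    have g: "X \<in> g" using smult(1) levi_g unfolding levi_def by auto
    have "\<rho> k (c \<cdot>\<^sub>m X) *\<^sub>v u = c \<cdot>\<^sub>v (\<rho> k X *\<^sub>v u)"
      unfolding rho_smult[OF g] using rho_C[OF g] uC by (rule smult_mat_vec)
    then show ?case using smult(2) by (simp add: cyclic_sub.smult)
  qed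
qed

lemma LHS_T: "u \<in> cyclic_sub m \<rho> (levi N g R') w \<Longrightarrow> u \<in> T"
  by (induction rule: cyclic_sub.induct) (auto intro: cyclic_sub.intros levi_T)

end

context clsrep begin

abbreviation "RHS \<equiv> vec_sum_span m (\<Union>\<mu> \<in> {\<mu>. Qplus N g R' \<mu>}. weight_space N g m \<rho> (\<lambda>H. lam H - \<mu> H))"

lemma ws_C: "v \<in> weight_space N g m \<rho> \<nu> \<Longrightarrow> v \<in> carrier_vec m" by (auto simp: weight_space_def)

lemma RHS_C: "v \<in> RHS \<Longrightarrow> v \<in> carrier_vec m"
  by (induction rule: vec_sum_span.induct) (auto simp: weight_space_def)

lemma ws_smult: "v \<in> weight_space N g m \<rho> \<nu> \<Longrightarrow> c \<cdot>\<^sub>v v \<in> weight_space N g m \<rho> \<nu>"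
proof -
  assume v: "v \<in> weight_space N g m \<rho> \<nu>"
  have vC: "v \<in> carrier_vec m" using v by (auto simp: weight_space_def)
  have "\<rho> 0 H *\<^sub>v (c \<cdot>\<^sub>v v) = \<nu> H \<cdot>\<^sub>v (c \<cdot>\<^sub>v v)" if H: "H \<in> cartan N g" for H
  proof -
    have "\<rho> 0 H *\<^sub>v (c \<cdot>\<^sub>v v) = c \<cdot>\<^sub>v (\<rho> 0 H *\<^sub>v v)" using mult_mat_vec[OF rho_C[OF cartan_g[OF H]] vC] .
    also have "\<dots> = c \<cdot>\<^sub>v (\<nu> H \<cdot>\<^sub>v v)" using v H by (auto simp: weight_space_def)
    finally show ?thesis by (simp add: smult_smult_assoc mult.commute)
  qed
  then show ?thesis using vC by (auto simp: weight_space_def)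
qed

lemma RHS_smult: "v \<in> RHS \<Longrightarrow> c \<cdot>\<^sub>v v \<in> RHS"
proof (induction rule: vec_sum_span.induct)
  case zero
  have "c \<cdot>\<^sub>v 0\<^sub>v m = 0\<^sub>v m" by (intro eq_vecI) auto
  then show ?case by (simp add: vec_sum_span.zero)
next
  case (base v) then show ?case using ws_smult by (blast intro: vec_sum_span.base)
next
  case (add u v)
  have "c \<cdot>\<^sub>v (u + v) = c \<cdot>\<^sub>v u + c \<cdot>\<^sub>v v" using smult_add_distrib_vec[OF RHS_C[OF add(1)] RHS_C[OF add(2)]] .
  then show ?case using add(3,4) by (simp add: vec_sum_span.add)
qed

lemma ws_act: assumes v: "v \<in> weight_space N g m \<rho> \<nu>" and Y: "Y \<in> root_space N g \<gamma>"
  shows "\<rho> k Y *\<^sub>v v \<in> weight_space N g m \<rho> (\<lambda>H. \<nu> H + \<gamma> H)"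
proof -
  have vC: "v \<in> carrier_vec m" using v by (auto simp: weight_space_def)
  have Yg: "Y \<in> g" using Y rs_g by auto
  have "\<rho> k Y *\<^sub>v v \<in> carrier_vec m" using rho_C[OF Yg, of k] vC by (rule mult_mat_vec_carrier)
  moreover have "\<rho> 0 H *\<^sub>v (\<rho> k Y *\<^sub>v v) = (\<nu> H + \<gamma> H) \<cdot>\<^sub>v (\<rho> k Y *\<^sub>v v)" if H: "H \<in> cartan N g" for H
    using weight_shift[OF H vC _ Y] v H by (auto simp: weight_space_def)
  ultimately show ?thesis by (auto simp: weight_space_def)
qed

lemma RHS_act: assumes Y: "Y \<in> gneg" and v: "v \<in> RHS" shows "\<rho> k Y *\<^sub>v v \<in> RHS"
proof -
  obtain \<gamma> where Yn: "Y \<in> nneg N g" "\<gamma> \<in> R'" "Y \<in> root_space N g \<gamma>" using Y by (auto simp: gneg_def)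
  have Yg: "Y \<in> g" using Yn rs_g by auto
  from v show ?thesis
  proof (induction rule: vec_sum_span.induct)
    case zero then show ?case using mat_vec_zero[OF rho_C[OF Yg, of k]] by (simp add: vec_sum_span.zero)
  next
    case (base v)
    then obtain \<mu> where mu: "Qplus N g R' \<mu>" "v \<in> weight_space N g m \<rho> (\<lambda>H. lam H - \<mu> H)" by blast
    have vC: "v \<in> carrier_vec m" using mu ws_C by blast
    show ?case
    proof (cases "Y = 0\<^sub>m N N")
      case True then show ?thesis using act_zero[OF vC] by (simp add: vec_sum_span.zero)
    next
      case False
      obtain a b where ab: "b < a" "a < N" "Y$$(a,b) \<noteq> 0" using nneg_entry[OF Yn(1) False] by blast
      have pba: "prp N g b a" using lower_prp[OF Yg ab] .
      have fg: "feq N g (dif a b) \<gamma>" using rs_entry[OF Yn(3)] ab by auto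
      have "feq N g (dif b a) (\<lambda>H. - \<gamma> H)" using fg unfolding feq_def dif_def by (metis minus_diff_eq)
      then have pos: "pos_root N g (\<lambda>H. - \<gamma> H)" using pos_root_feq prp_pos[OF pba] by blast
      have inR: "(\<lambda>H. - \<gamma> H) \<in> R'" using R'_neg Yn(2) by blast
      define \<mu>' where "\<mu>' = (\<lambda>H. \<mu> H - \<gamma> H)"
      have "Qplus N g R' \<mu>'"
      proof -
        obtain as where as: "\<forall>\<alpha>\<in>set as. \<alpha> \<in> R' \<and> pos_root N g \<alpha>"
          "\<forall>H\<in>cartan N g. \<mu> H = sum_list (map (\<lambda>\<alpha>. \<alpha> H) as)" using mu(1) by (auto simp: Qplus_def)
        show ?thesis unfolding Qplus_def
          by (intro exI[of _ "(\<lambda>H. - \<gamma> H) # as"]) (use as pos inR in \<open>auto simp: \<mu>'_def\<close>)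
      qed
      moreover have "\<rho> k Y *\<^sub>v v \<in> weight_space N g m \<rho> (\<lambda>H. lam H - \<mu>' H)"
      proof -
        have "\<rho> k Y *\<^sub>v v \<in> weight_space N g m \<rho> (\<lambda>H. (lam H - \<mu> H) + \<gamma> H)" using ws_act[OF mu(2) Yn(3)] .
        moreover have "(\<lambda>H. (lam H - \<mu> H) + \<gamma> H) = (\<lambda>H. lam H - \<mu>' H)" by (auto simp: \<mu>'_def)
        ultimately show ?thesis by simp
      qed
      ultimately show ?thesis by (blast intro: vec_sum_span.base)
    qed
  next
    case (add u v)
    have c: "u \<in> carrier_vec m" "v \<in> carrier_vec m" using RHS_C add(1,2) by auto
    show ?case using add(3,4) mult_add_distrib_mat_vec[OF rho_C[OF Yg, of k] c] by (simp add: vec_sum_span.add)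
  qed
qed

lemma T_RHS: "u \<in> T \<Longrightarrow> u \<in> RHS"
proof (induction rule: cyclic_sub.induct)
  case gen
  have "Qplus N g R' (\<lambda>H. 0)" unfolding Qplus_def by (intro exI[of _ "[]"]) auto
  moreover have "w \<in> weight_space N g m \<rho> (\<lambda>H. lam H - 0)" using wW by simp
  ultimately show ?case by (blast intro: vec_sum_span.base)
next case zero show ?case by (rule vec_sum_span.zero)
next case (add u v) then show ?case by (simp add: vec_sum_span.add)
next case (smult u c) then show ?case by (blast intro: RHS_smult)
next case (act X u k) then show ?case using RHS_act by blast
qed

lemma LHS_sub: "vspan m S \<subseteq> cyclic_sub m \<rho> (levi N g R') w" if "S \<subseteq> cyclic_sub m \<rho> (levi N g R') w"
proof
  fix v assume "v \<in> vspan m S"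
  then show "v \<in> cyclic_sub m \<rho> (levi N g R') w"
    by (induction rule: vspan.induct) (use that in \<open>auto intro: cyclic_sub.intros\<close>)
qed

lemma RHS_LHS: "v \<in> RHS \<Longrightarrow> v \<in> cyclic_sub m \<rho> (levi N g R') w"
proof (induction rule: vec_sum_span.induct)
  case zero then show ?case by (rule cyclic_sub.zero)
next
  case (add u v) then show ?case by (blast intro: cyclic_sub.add)
next
  case (base v)
  then obtain \<mu> where mu: "Qplus N g R' \<mu>" "v \<in> weight_space N g m \<rho> (\<lambda>H. lam H - \<mu> H)" by blast
  have vC: "v \<in> carrier_vec m" using mu ws_C by blast
  have ev: "\<rho> 0 H1 *\<^sub>v v = lam H1 \<cdot>\<^sub>v v" using mu(2) H1(1) Qplus_H1[OF mu(1)] by (auto simp: weight_space_def)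
  define P where "P = (\<lambda>(u,\<beta>). (u, \<beta> H1)) ` M"
  have fP: "fst ` P = fst ` M" unfolding P_def by force
  have Pe: "\<And>u c. (u,c) \<in> P \<Longrightarrow> u \<in> carrier_vec m \<and> \<rho> 0 H1 *\<^sub>v u = c \<cdot>\<^sub>v u"
    unfolding P_def using M_wt H1(1) by auto
  have v1: "v \<in> vspan m (fst ` P)" using W_span[OF vC] fP by simp
  have "v \<in> vspan m (fst ` {p\<in>P. snd p = lam H1})"
    using eig_proj[OF rho_C[OF cartan_g[OF H1(1)], of 0] Pe v1 ev] .
  moreover have "fst ` {p\<in>P. snd p = lam H1} \<subseteq> cyclic_sub m \<rho> (levi N g R') w"
  proof -
    have "u \<in> cyclic_sub m \<rho> (levi N g R') w" if uM: "(u,\<beta>) \<in> M" "\<beta> H1 = lam H1" for u \<beta>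
    proof -
      obtain r where "\<beta> H1 = lam H1 - of_nat r" "r = 0 \<longrightarrow> u \<in> cyclic_sub m \<rho> (levi N g R') w"
        using M_H1[OF uM(1)] by blast
      then show ?thesis using uM(2) by auto
    qed
    then show ?thesis unfolding P_def by auto
  qed
  ultimately show ?case using LHS_sub by blast
qed

theorem main_eq: "cyclic_sub m \<rho> (levi N g R') w = RHS"
  using LHS_T T_RHS RHS_LHS by blast

end

lemma refl_aux: "a < (N::nat) \<Longrightarrow> N - 1 - (N - 1 - a) = a" by arith

lemma sum_refl: "(\<Sum>k<(N::nat). f k) = (\<Sum>l<N. f (N - 1 - l))"
  by (rule sum.reindex_bij_witness[where i="\<lambda>l. N-1-l" and j="\<lambda>l. N-1-l"]) (auto simp: refl_aux)

definition formalg :: "nat \<Rightarrow> (nat \<Rightarrow> complex) \<Rightarrow> complex mat set" where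
  "formalg N s = {X \<in> carrier_mat N N. \<forall>i<N. \<forall>j<N. X$$(N-1-j, N-1-i) = - (s i * s j) * X$$(i,j)}"

locale form =
  fixes N :: nat and s :: "nat \<Rightarrow> complex" and c :: complex
  assumes s2: "\<And>i. s i * s i = 1" and sc: "\<And>i. i < N \<Longrightarrow> s (N-1-i) * s i = c" and c2: "c * c = 1"
begin

abbreviation "G \<equiv> formalg N s"

lemma memG: "X \<in> G \<longleftrightarrow> X \<in> carrier_mat N N \<and> (\<forall>i<N. \<forall>j<N. X$$(N-1-j, N-1-i) = - (s i * s j) * X$$(i,j))"
  by (simp add: formalg_def)

lemma mult_refl: assumes X: "X \<in> G" and Y: "Y \<in> G" and ij: "i < N" "j < N"
  shows "(X*Y)$$(N-1-j, N-1-i) = s i * s j * (Y*X)$$(i,j)"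
proof -
  have XC: "X \<in> carrier_mat N N" and YC: "Y \<in> carrier_mat N N" using X Y by (auto simp: memG)
  have "(X*Y)$$(N-1-j, N-1-i) = (\<Sum>k<N. X$$(N-1-j,k) * Y$$(k,N-1-i))" using mult_entry[OF XC YC] ij by simp
  also have "\<dots> = (\<Sum>l<N. X$$(N-1-j,N-1-l) * Y$$(N-1-l,N-1-i))" by (rule sum_refl)
  also have "\<dots> = (\<Sum>l<N. s i * s j * (Y$$(i,l) * X$$(l,j)))"
  proof (rule sum.cong[OF refl])
    fix l assume "l \<in> {..<N}"
    then have l: "l < N" by simp
    have "X$$(N-1-j,N-1-l) = - (s l * s j) * X$$(l,j)" using X l ij by (auto simp: memG)
    moreover have "Y$$(N-1-l,N-1-i) = - (s i * s l) * Y$$(i,l)" using Y l ij by (auto simp: memG)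
    ultimately have "X$$(N-1-j,N-1-l) * Y$$(N-1-l,N-1-i) = (s l * s l) * s i * s j * (Y$$(i,l) * X$$(l,j))"
      by (simp add: algebra_simps)
    then show "X$$(N-1-j,N-1-l) * Y$$(N-1-l,N-1-i) = s i * s j * (Y$$(i,l) * X$$(l,j))" using s2 by simp
  qed
  also have "\<dots> = s i * s j * (Y*X)$$(i,j)" using mult_entry[OF YC XC ij] by (simp add: sum_distrib_left)
  finally show ?thesis .
qed

lemma refl_refl: "i < N \<Longrightarrow> N - 1 - (N - 1 - i) = i" by simp

lemma G_br: assumes X: "X \<in> G" and Y: "Y \<in> G" shows "lie_br X Y \<in> G"
proof -
  have XC: "X \<in> carrier_mat N N" and YC: "Y \<in> carrier_mat N N" using X Y by (auto simp: memG)
  have "lie_br X Y $$(N-1-j, N-1-i) = - (s i * s j) * lie_br X Y $$(i,j)" if ij: "i < N" "j < N" for i j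
  proof -
    have "N-1-j < N" "N-1-i < N" using ij by auto
    then have "lie_br X Y $$(N-1-j, N-1-i) = (X*Y)$$(N-1-j, N-1-i) - (Y*X)$$(N-1-j, N-1-i)"
      using XC YC by (simp add: lie_br_def)
    also have "\<dots> = s i * s j * (Y*X)$$(i,j) - s i * s j * (X*Y)$$(i,j)"
      using mult_refl[OF X Y ij] mult_refl[OF Y X ij] by simp
    also have "\<dots> = - (s i * s j) * ((X*Y)$$(i,j) - (Y*X)$$(i,j))" by (simp add: algebra_simps)
    also have "(X*Y)$$(i,j) - (Y*X)$$(i,j) = lie_br X Y $$(i,j)" using XC YC ij by (simp add: lie_br_def)
    finally show ?thesis .
  qed
  then show ?thesis using XC YC by (auto simp: memG lie_br_def)
qed

lemma cartan_refl: assumes H: "H \<in> cartan N G" "i < N" shows "H$$(N-1-i, N-1-i) = - H$$(i,i)"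
proof -
  have "H \<in> G" using H by (auto simp: cartan_def)
  then have "H$$(N-1-i, N-1-i) = - (s i * s i) * H$$(i,i)" using H(2) by (auto simp: memG)
  then show ?thesis using s2 by simp
qed

lemma diag_cartan: assumes d: "\<And>i. i < N \<Longrightarrow> d (N-1-i) = - d i"
  shows "mat N N (\<lambda>(i,j). if i = j then d i else 0) \<in> cartan N G"
proof -
  have "mat N N (\<lambda>(i,j). if i = j then d i else 0) \<in> G"
    unfolding memG using d s2 by auto
  then show ?thesis by (auto simp: cartan_def)
qed

lemma cls_form: assumes step_prp: "\<And>a b. step a b \<Longrightarrow> prp N G a b"
  and S2: "\<And>a b. prp N G a b \<Longrightarrow> step a b \<or> (\<exists>c d e f. prp N G c d \<and> step e f \<and> d - c < b - a \<and>
            feq N G (dif a b) (\<lambda>H. dif c d H + dif e f H))"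
  and S3: "\<And>P. (\<And>a b c d. step a b \<Longrightarrow> step c d \<Longrightarrow> feq N G (dif a b) (dif c d) \<Longrightarrow> P a b = P c d) \<Longrightarrow>
       \<exists>H\<in>cartan N G. \<forall>a b. step a b \<longrightarrow> dif a b H = (if P a b then 0 else 1)"
  shows "cls N G step"
proof (unfold_locales)
  show "G \<subseteq> carrier_mat N N" by (auto simp: memG)
next
  show "0\<^sub>m N N \<in> G" by (auto simp: memG)
next
  fix X Y assume "X \<in> G" "Y \<in> G" then show "X + Y \<in> G" by (auto simp: memG algebra_simps)
next
  fix X and a :: complex assume "X \<in> G" then show "a \<cdot>\<^sub>m X \<in> G" by (auto simp: memG algebra_simps)
next
  fix X Y assume "X \<in> G" "Y \<in> G" then show "lie_br X Y \<in> G" by (rule G_br)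
next
  fix X assume "X \<in> G" then show "X\<^sup>T \<in> G" by (auto simp: memG mult.commute)
next
  fix X assume X: "X \<in> G"
  have "(N-1-j < N-1-i) = (i < j)" if "i < N" "j < N" for i j using that by auto
  then show "up_part N X \<in> G" using X by (auto simp: memG up_part_def)
next
  fix X assume X: "X \<in> G"
  have "(N-1-j = N-1-i) = (i = j)" if "i < N" "j < N" for i j using that by auto
  then show "dg_part N X \<in> G" using X by (auto simp: memG dg_part_def)
next
  have "H0 N \<in> cartan N G" unfolding H0_def
    by (rule diag_cartan) (auto simp: of_nat_diff field_simps)
  then show "H0 N \<in> G" by (auto simp: cartan_def)
next
  fix Y a b assume Y: "Y \<in> G" and ab: "a < N" "b < N" "a \<noteq> b"
  define S where "S i j \<longleftrightarrow> (i,j) = (a,b) \<or> (i,j) = (N-1-b, N-1-a)" for i j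
  define C where "C = mat N N (\<lambda>(i,j). if S i j then Y$$(i,j) else 0)"
  have YC: "Y \<in> carrier_mat N N" using Y by (auto simp: memG)
  have Sr: "S (N-1-j) (N-1-i) = S i j" if "i < N" "j < N" for i j
    using that ab unfolding S_def by auto
  have "C \<in> G" unfolding memG
  proof (intro conjI allI impI)
    show "C \<in> carrier_mat N N" by (simp add: C_def)
    fix i j assume ij: "i < N" "j < N"
    show "C$$(N-1-j, N-1-i) = - (s i * s j) * C$$(i,j)"
      using Sr[OF ij] ij Y by (auto simp: C_def memG)
  qed
  moreover have "C$$(a,b) = Y$$(a,b)" using ab by (simp add: C_def S_def)
  moreover have "\<forall>i<N. \<forall>j<N. C$$(i,j) = 0 \<or> C$$(i,j) = Y$$(i,j)" by (auto simp: C_def)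
  moreover have "\<forall>i<N. \<forall>j<N. C$$(i,j) \<noteq> 0 \<longrightarrow> feq N G (dif i j) (dif a b)"
  proof (intro allI impI)
    fix i j assume ij: "i < N" "j < N" "C$$(i,j) \<noteq> 0"
    then have "S i j" by (auto simp: C_def split: if_splits)
    then show "feq N G (dif i j) (dif a b)"
      unfolding S_def feq_def dif_def using cartan_refl ab by auto
  qed
  ultimately show "\<exists>C\<in>G. C$$(a,b) = Y$$(a,b) \<and>
       (\<forall>i<N. \<forall>j<N. C$$(i,j) = 0 \<or> C$$(i,j) = Y$$(i,j)) \<and>
       (\<forall>i<N. \<forall>j<N. C$$(i,j) \<noteq> 0 \<longrightarrow> feq N G (dif i j) (dif a b))" by blast
qed (fact step_prp S2 S3)+

end

lemma sum_single: "t < (N::nat) \<Longrightarrow> (\<Sum>k<N. if k = t then f k else 0) = (f t :: complex)"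
  by (simp add: sum.delta)

lemma so_eq: "so_alg N = formalg N (\<lambda>_. 1)"
proof -
  have key: "X\<^sup>T * J_orth N + J_orth N * X = 0\<^sub>m N N \<longleftrightarrow> (\<forall>a<N. \<forall>b<N. X$$(N-1-b, a) + X$$(N-1-a, b) = 0)"
    if X: "X \<in> carrier_mat N N" for X
  proof -
    have J: "J_orth N \<in> carrier_mat N N" by (simp add: J_orth_def)
    have e1: "(X\<^sup>T * J_orth N) $$ (a,b) = X$$(N-1-b, a)" if ab: "a < N" "b < N" for a b
    proof -
      have "(X\<^sup>T * J_orth N) $$ (a,b) = (\<Sum>k<N. X\<^sup>T $$ (a,k) * J_orth N $$ (k,b))"
        using mult_entry[of "X\<^sup>T" N "J_orth N"] X J ab by simp
      also have "\<dots> = (\<Sum>k<N. if k = N-1-b then X$$(k,a) else 0)"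
        using ab X by (intro sum.cong refl) (auto simp: J_orth_def)
      also have "\<dots> = X$$(N-1-b, a)" using ab by (intro sum_single) auto
      finally show ?thesis .
    qed
    have e2: "(J_orth N * X) $$ (a,b) = X$$(N-1-a, b)" if ab: "a < N" "b < N" for a b
    proof -
      have "(J_orth N * X) $$ (a,b) = (\<Sum>k<N. J_orth N $$ (a,k) * X $$ (k,b))"
        using mult_entry[OF J X] ab by simp
      also have "\<dots> = (\<Sum>k<N. if k = N-1-a then X$$(k,b) else 0)"
        using ab X by (intro sum.cong refl) (auto simp: J_orth_def)
      also have "\<dots> = X$$(N-1-a, b)" using ab by (intro sum_single) auto
      finally show ?thesis .
    qed
    show ?thesis
    proof
      assume z: "X\<^sup>T * J_orth N + J_orth N * X = 0\<^sub>m N N"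
      show "\<forall>a<N. \<forall>b<N. X$$(N-1-b, a) + X$$(N-1-a, b) = 0"
      proof (intro allI impI)
        fix a b assume ab: "a < N" "b < N"
        have "(X\<^sup>T * J_orth N + J_orth N * X) $$ (a,b) = 0" using z ab by simp
        then show "X$$(N-1-b, a) + X$$(N-1-a, b) = 0" using e1[OF ab] e2[OF ab] ab X J by simp
      qed
    next
      assume h: "\<forall>a<N. \<forall>b<N. X$$(N-1-b, a) + X$$(N-1-a, b) = 0"
      show "X\<^sup>T * J_orth N + J_orth N * X = 0\<^sub>m N N"
        using h e1 e2 X J by (intro eq_matI) auto
    qed
  qed
  show ?thesis
  proof (rule Set.set_eqI, rule iffI)
    fix X assume "X \<in> so_alg N"
    then have X: "X \<in> carrier_mat N N" and h: "\<forall>a<N. \<forall>b<N. X$$(N-1-b, a) + X$$(N-1-a, b) = 0"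
      using key by (auto simp: so_alg_def)
    have "X$$(N-1-j, N-1-i) = - X$$(i,j)" if "i < N" "j < N" for i j
      using h[rule_format, of "N-1-i" j] that by (simp add: refl_aux algebra_simps eq_neg_iff_add_eq_0)
    then show "X \<in> formalg N (\<lambda>_. 1)" using X by (auto simp: formalg_def)
  next
    fix X assume "X \<in> formalg N (\<lambda>_. 1)"
    then have X: "X \<in> carrier_mat N N" and h: "\<forall>i<N. \<forall>j<N. X$$(N-1-j, N-1-i) = - X$$(i,j)"
      by (auto simp: formalg_def)
    have "X$$(N-1-b, a) + X$$(N-1-a, b) = 0" if "a < N" "b < N" for a b
      using h[rule_format, of "N-1-a" b] that by (simp add: refl_aux)
    then show "X \<in> so_alg N" using key X by (auto simp: so_alg_def)
  qed
qed

definition sgn_sp :: "nat \<Rightarrow> nat \<Rightarrow> complex" where "sgn_sp n i = (if i < n then 1 else -1)"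

lemma sp_eq: "sp_alg n = formalg (2*n) (sgn_sp n)"
proof -
  let ?N = "2*n"
  have key: "X\<^sup>T * J_symp n + J_symp n * X = 0\<^sub>m ?N ?N \<longleftrightarrow>
     (\<forall>a<?N. \<forall>b<?N. sgn_sp n (?N-1-b) * X$$(?N-1-b, a) + sgn_sp n a * X$$(?N-1-a, b) = 0)"
    if X: "X \<in> carrier_mat ?N ?N" for X
  proof -
    have J: "J_symp n \<in> carrier_mat ?N ?N" by (simp add: J_symp_def)
    have e1: "(X\<^sup>T * J_symp n) $$ (a,b) = sgn_sp n (?N-1-b) * X$$(?N-1-b, a)" if ab: "a < ?N" "b < ?N" for a b
    proof -
      have "(X\<^sup>T * J_symp n) $$ (a,b) = (\<Sum>k<?N. X\<^sup>T $$ (a,k) * J_symp n $$ (k,b))"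
        using mult_entry[of "X\<^sup>T" ?N "J_symp n"] X J ab by simp
      also have "\<dots> = (\<Sum>k<?N. if k = ?N-1-b then sgn_sp n k * X$$(k,a) else 0)"
        using ab X by (intro sum.cong refl) (auto simp: J_symp_def sgn_sp_def)
      also have "\<dots> = sgn_sp n (?N-1-b) * X$$(?N-1-b, a)" using ab by (intro sum_single) auto
      finally show ?thesis .
    qed
    have e2: "(J_symp n * X) $$ (a,b) = sgn_sp n a * X$$(?N-1-a, b)" if ab: "a < ?N" "b < ?N" for a b
    proof -
      have "(J_symp n * X) $$ (a,b) = (\<Sum>k<?N. J_symp n $$ (a,k) * X $$ (k,b))"
        using mult_entry[OF J X] ab by simp
      also have "\<dots> = (\<Sum>k<?N. if k = ?N-1-a then sgn_sp n a * X$$(k,b) else 0)"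
        using ab X by (intro sum.cong refl) (auto simp: J_symp_def sgn_sp_def)
      also have "\<dots> = sgn_sp n a * X$$(?N-1-a, b)" using ab by (intro sum_single) auto
      finally show ?thesis .
    qed
    show ?thesis
    proof
      assume z: "X\<^sup>T * J_symp n + J_symp n * X = 0\<^sub>m ?N ?N"
      show "\<forall>a<?N. \<forall>b<?N. sgn_sp n (?N-1-b) * X$$(?N-1-b, a) + sgn_sp n a * X$$(?N-1-a, b) = 0"
      proof (intro allI impI)
        fix a b assume ab: "a < ?N" "b < ?N"
        have "(X\<^sup>T * J_symp n + J_symp n * X) $$ (a,b) = 0" using z ab by simp
        then show "sgn_sp n (?N-1-b) * X$$(?N-1-b, a) + sgn_sp n a * X$$(?N-1-a, b) = 0"
          using e1[OF ab] e2[OF ab] ab X J by simp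
      qed
    next
      assume h: "\<forall>a<?N. \<forall>b<?N. sgn_sp n (?N-1-b) * X$$(?N-1-b, a) + sgn_sp n a * X$$(?N-1-a, b) = 0"
      show "X\<^sup>T * J_symp n + J_symp n * X = 0\<^sub>m ?N ?N"
        using h e1 e2 X J by (intro eq_matI) auto
    qed
  qed
  have sref: "sgn_sp n (?N-1-i) = - sgn_sp n i" if "i < ?N" for i using that by (auto simp: sgn_sp_def)
  have s2: "sgn_sp n i * sgn_sp n i = 1" for i by (auto simp: sgn_sp_def)
  show ?thesis
  proof (rule Set.set_eqI, rule iffI)
    fix X assume "X \<in> sp_alg n"
    then have X: "X \<in> carrier_mat ?N ?N" and
      h: "\<forall>a<?N. \<forall>b<?N. sgn_sp n (?N-1-b) * X$$(?N-1-b, a) + sgn_sp n a * X$$(?N-1-a, b) = 0"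
      using key by (auto simp: sp_alg_def)
    have "X$$(?N-1-j, ?N-1-i) = - (sgn_sp n i * sgn_sp n j) * X$$(i,j)" if ij: "i < ?N" "j < ?N" for i j
    proof -
      have "sgn_sp n (?N-1-j) * X$$(?N-1-j, ?N-1-i) + sgn_sp n (?N-1-i) * X$$(i, j) = 0"
        using h[rule_format, of "?N-1-i" j] ij by (simp add: refl_aux)
      then have "- sgn_sp n j * X$$(?N-1-j, ?N-1-i) - sgn_sp n i * X$$(i, j) = 0" using sref ij by simp
      then have e: "- (sgn_sp n j * X$$(?N-1-j, ?N-1-i)) = sgn_sp n i * X$$(i,j)" by (simp add: algebra_simps)
      have "X$$(?N-1-j, ?N-1-i) = - sgn_sp n j * (- (sgn_sp n j * X$$(?N-1-j, ?N-1-i)))"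
        using s2[of j] by (simp add: algebra_simps)
      also have "\<dots> = - sgn_sp n j * (sgn_sp n i * X$$(i,j))" unfolding e ..
      finally show ?thesis by (simp add: algebra_simps)
    qed
    then show "X \<in> formalg ?N (sgn_sp n)" using X by (auto simp: formalg_def)
  next
    fix X assume "X \<in> formalg ?N (sgn_sp n)"
    then have X: "X \<in> carrier_mat ?N ?N" and
      h: "\<forall>i<?N. \<forall>j<?N. X$$(?N-1-j, ?N-1-i) = - (sgn_sp n i * sgn_sp n j) * X$$(i,j)"
      by (auto simp: formalg_def)
    have "sgn_sp n (?N-1-b) * X$$(?N-1-b, a) + sgn_sp n a * X$$(?N-1-a, b) = 0" if ab: "a < ?N" "b < ?N" for a b
    proof -
      have "X$$(?N-1-b, a) = - (sgn_sp n (?N-1-a) * sgn_sp n b) * X$$(?N-1-a,b)"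
        using h[rule_format, of "?N-1-a" b] ab by (simp add: refl_aux)
      then have "X$$(?N-1-b, a) = sgn_sp n a * sgn_sp n b * X$$(?N-1-a,b)" using sref ab by simp
      then show ?thesis using sref[of b] ab s2[of b] by (simp add: algebra_simps)
    qed
    then show "X \<in> sp_alg n" using key X by (auto simp: sp_alg_def)
  qed
qed


definition mir :: "nat \<Rightarrow> (nat \<Rightarrow> complex) \<Rightarrow> complex mat" where
  "mir N L = mat N N (\<lambda>(i,j). if i = j then (if i < N div 2 then L i else if N-1-i < N div 2 then - L (N-1-i) else 0) else 0)"

lemma mir_val: "i < N \<Longrightarrow> mir N L $$ (i,i) = (if i < N div 2 then L i else if N-1-i < N div 2 then - L (N-1-i) else 0)"
  by (simp add: mir_def)

definition Lf :: "nat \<Rightarrow> complex \<Rightarrow> (nat \<Rightarrow> complex) \<Rightarrow> nat \<Rightarrow> complex" where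
  "Lf n B t i = B + (\<Sum>k\<in>{i..<n-1}. t k)"

lemma Lf_step: "Suc i < n \<Longrightarrow> Lf n B t i - Lf n B t (Suc i) = t i"
  by (simp add: Lf_def sum.atLeast_Suc_lessThan)

lemma Lf_last: "Lf n B t (n-1) = B" by (simp add: Lf_def)

context form begin

lemma mir_cartan: "mir N L \<in> cartan N G"
proof -
  have "mat N N (\<lambda>(i,j). if i = j then (\<lambda>i. if i < N div 2 then L i else if N-1-i < N div 2 then - L (N-1-i) else 0) i else 0) \<in> cartan N G"
    by (rule diag_cartan) (auto simp: refl_aux)
  then show ?thesis by (simp add: mir_def)
qed

lemma prp_gen: assumes "a < b" "b < N" "a + b \<noteq> N - 1" shows "prp N G a b"
proof -
  define E :: "complex mat" where "E = mat N N (\<lambda>(i,j). if (i,j) = (a,b) then 1 else if (i,j) = (N-1-b, N-1-a) then - (s a * s b) else 0)"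
  have ne: "(N-1-b, N-1-a) \<noteq> (a,b)" using assms by auto
  have "E \<in> G" unfolding memG
  proof (intro conjI allI impI)
    show "E \<in> carrier_mat N N" by (simp add: E_def)
    fix i j assume ij: "i < N" "j < N"
    consider "(i,j) = (a,b)" | "(i,j) = (N-1-b, N-1-a)" | "(i,j) \<noteq> (a,b)" "(i,j) \<noteq> (N-1-b, N-1-a)" by blast
    then show "E$$(N-1-j, N-1-i) = - (s i * s j) * E$$(i,j)"
    proof cases
      case 1 then show ?thesis using ij ne by (auto simp: E_def)
    next
      case 2
      have "s (N-1-b) * s b = c" "s (N-1-a) * s a = c" using sc assms by auto
      then have one: "s (N-1-b) * s (N-1-a) * (s a * s b) = 1" using c2
        by (metis mult.assoc mult.left_commute)
      have i: "i = N-1-b" and j: "j = N-1-a" using 2 by auto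
      have l: "E$$(N-1-j, N-1-i) = 1" using i j assms by (simp add: E_def refl_aux)
      have r: "E$$(i,j) = - (s a * s b)" using i j ne assms by (auto simp: E_def)
      have si: "s i = s (N-1-b)" and sj: "s j = s (N-1-a)" using i j by auto
      show ?thesis unfolding l r si sj using one by (simp add: algebra_simps)
    next
      case 3
      have A: "(N-1-j, N-1-i) \<noteq> (a,b)"
      proof
        assume "(N-1-j, N-1-i) = (a,b)"
        then have e: "N-1-j = a" "N-1-i = b" by auto
        have "j = N-1-a" using e(1) ij by arith
        moreover have "i = N-1-b" using e(2) ij by arith
        ultimately show False using 3 by auto
      qed
      have B: "(N-1-j, N-1-i) \<noteq> (N-1-b, N-1-a)"
      proof
        assume "(N-1-j, N-1-i) = (N-1-b, N-1-a)"
        then have e: "N-1-j = N-1-b" "N-1-i = N-1-a" by auto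
        have "j = b" using e(1) ij assms by arith
        moreover have "i = a" using e(2) ij assms by arith
        ultimately show False using 3 by auto
      qed
      have Eval: "\<And>x y. x < N \<Longrightarrow> y < N \<Longrightarrow> E$$(x,y) = (if (x,y) = (a,b) then 1 else if (x,y) = (N-1-b, N-1-a) then - (s a * s b) else 0)"
        by (simp add: E_def)
      have e1: "N-1-j < N" "N-1-i < N" using ij by auto
      have "E$$(N-1-j, N-1-i) = 0" using Eval[OF e1, unfolded if_not_P[OF A] if_not_P[OF B]] .
      moreover have "E$$(i,j) = 0" using Eval[OF ij, unfolded if_not_P[OF 3(1)] if_not_P[OF 3(2)]] .
      ultimately show ?thesis by simp
    qed
  qed
  moreover have "E$$(a,b) = 1" using assms by (simp add: E_def)
  ultimately show ?thesis unfolding prp_def using assms by (intro conjI bexI[of _ E]) auto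
qed

lemma prp_anti: assumes c: "c = -1" and a: "a < N-1-a" shows "prp N G a (N-1-a)"
proof -
  define E :: "complex mat" where "E = mat N N (\<lambda>(i,j). if (i,j) = (a,N-1-a) then 1 else 0)"
  have aN: "a < N" using a by auto
  have "E \<in> G" unfolding memG
  proof (intro conjI allI impI)
    show "E \<in> carrier_mat N N" by (simp add: E_def)
    fix i j assume ij: "i < N" "j < N"
    show "E$$(N-1-j, N-1-i) = - (s i * s j) * E$$(i,j)"
    proof (cases "(i,j) = (a, N-1-a)")
      case True
      have "s (N-1-a) * s a = c" using sc aN by auto
      then have sa: "s a * s (N-1-a) = -1" using c by (simp add: mult.commute)
      have l: "E$$(N-1-j, N-1-i) = 1" using True aN by (simp add: E_def refl_aux)
      have r: "E$$(i,j) = 1" using True aN by (simp add: E_def)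
      have si: "s i = s a" and sj: "s j = s (N-1-a)" using True by auto
      show ?thesis unfolding l r si sj sa by simp
    next
      case False
      have A: "(N-1-j, N-1-i) \<noteq> (a, N-1-a)"
      proof
        assume "(N-1-j, N-1-i) = (a, N-1-a)"
        then have e: "N-1-j = a" "N-1-i = N-1-a" by auto
        have "j = N-1-a" using e(1) ij by arith
        moreover have "i = a" using e(2) ij aN by arith
        ultimately show False using False by auto
      qed
      have Eval: "\<And>x y. x < N \<Longrightarrow> y < N \<Longrightarrow> E$$(x,y) = (if (x,y) = (a,N-1-a) then 1 else 0)"
        by (simp add: E_def)
      have e1: "N-1-j < N" "N-1-i < N" using ij by auto
      have "E$$(N-1-j, N-1-i) = 0" using Eval[OF e1, unfolded if_not_P[OF A]] .
      moreover have "E$$(i,j) = 0" using Eval[OF ij, unfolded if_not_P[OF False]] .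
      ultimately show ?thesis by simp
    qed
  qed
  moreover have "E$$(a,N-1-a) = 1" using aN by (simp add: E_def)
  ultimately show ?thesis unfolding prp_def using a by (intro conjI bexI[of _ E]) auto
qed

lemma prp_not: assumes c: "c = 1" and p: "prp N G a b" shows "a + b \<noteq> N - 1"
proof
  assume e: "a + b = N - 1"
  obtain X where X: "X \<in> G" "X$$(a,b) \<noteq> 0" and ab: "a < b" "b < N" using p by (auto simp: prp_def)
  have bb: "b = N-1-a" "N-1-b = a" using e ab by auto
  have "X$$(N-1-b, N-1-a) = - (s a * s b) * X$$(a,b)" using X ab by (auto simp: memG)
  moreover have "s a * s b = 1" using sc[of a] ab bb c by (simp add: mult.commute)
  ultimately have "X$$(a,b) = - X$$(a,b)" using bb by simp
  then show False using X(2) by simp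
qed

lemma refl_step_feq: assumes "Suc k < N" shows "feq N G (dif k (Suc k)) (dif (N-2-k) (N-1-k))"
proof -
  have "dif (N-2-k) (N-1-k) H = dif k (Suc k) H" if H: "H \<in> cartan N G" for H
  proof -
    have "H$$(N-1-Suc k, N-1-Suc k) = - H$$(Suc k, Suc k)" "H$$(N-1-k, N-1-k) = - H$$(k,k)"
      using cartan_refl[OF H] assms by auto
    moreover have "N-2-k = N-1-Suc k" by simp
    ultimately show ?thesis by (simp add: dif_def)
  qed
  then show ?thesis by (auto simp: feq_def)
qed

end

definition stepA :: "nat \<Rightarrow> nat \<Rightarrow> nat \<Rightarrow> bool" where "stepA N a b \<longleftrightarrow> b = Suc a \<and> Suc a < N"

lemma dif_split: "dif a b H = dif a c H + dif c b H" by (simp add: dif_def)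

lemma form_sp: "n \<ge> 1 \<Longrightarrow> form (2*n) (sgn_sp n) (-1)"
  by unfold_locales (auto simp: sgn_sp_def)

lemma form_so: "form N (\<lambda>_. 1) 1"
  by unfold_locales auto

lemma sp_cls: assumes n: "n \<ge> 1" shows "cls (2*n) (sp_alg n) (stepA (2*n))"
proof -
  let ?N = "2*n"
  interpret F: form ?N "sgn_sp n" "-1" by (rule form_sp[OF n])
  have prpI: "prp ?N (sp_alg n) a b" if "a < b" "b < ?N" for a b
  proof (cases "a + b = ?N - 1")
    case True
    then have "b = ?N-1-a" "a < ?N-1-a" using that by auto
    then show ?thesis using F.prp_anti[of a] sp_eq by simp
  next
    case False then show ?thesis using F.prp_gen[OF that] sp_eq by simp
  qed
  show ?thesis unfolding sp_eq
  proof (rule F.cls_form)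
    fix a b assume "stepA ?N a b" then show "prp ?N (formalg ?N (sgn_sp n)) a b"
      using prpI sp_eq by (auto simp: stepA_def)
  next
    fix a b assume p: "prp ?N (formalg ?N (sgn_sp n)) a b"
    then have ab: "a < b" "b < ?N" by (auto simp: prp_def)
    show "stepA ?N a b \<or> (\<exists>c d e f. prp ?N (formalg ?N (sgn_sp n)) c d \<and> stepA ?N e f \<and> d - c < b - a \<and>
            feq ?N (formalg ?N (sgn_sp n)) (dif a b) (\<lambda>H. dif c d H + dif e f H))"
    proof (cases "b = Suc a")
      case True then show ?thesis using ab by (auto simp: stepA_def)
    next
      case False
      then have "a < b - 1" using ab by auto
      then show ?thesis using ab prpI[of a "b - 1"] sp_eq dif_split[of a b _ "b-1"]
        by (intro disjI2 exI[of _ a] exI[of _ "b - 1"] exI[of _ "b - 1"] exI[of _ b]) (auto simp: feq_def stepA_def)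
    qed
  next
    fix P :: "nat \<Rightarrow> nat \<Rightarrow> bool"
    assume inv: "\<And>a b c d. stepA ?N a b \<Longrightarrow> stepA ?N c d \<Longrightarrow> feq ?N (formalg ?N (sgn_sp n)) (dif a b) (dif c d)
        \<Longrightarrow> P a b = P c d"
    define t where "t k = (if P k (Suc k) then 0 else 1 :: complex)" for k
    define L where "L = Lf n (t (n-1) / 2) t"
    define H where "H = mir ?N L"
    have Hc: "H \<in> cartan ?N (formalg ?N (sgn_sp n))" unfolding H_def by (rule F.mir_cartan)
    have "dif a (Suc a) H = t a" if a: "Suc a < ?N" for a
    proof -
      consider "Suc a < n" | "a = n - 1" | "a \<ge> n" by linarith
      then show ?thesis
      proof cases
        case 1 then show ?thesis using a Lf_step[OF 1] by (simp add: H_def dif_def mir_val L_def)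
      next
        case 2
        have "?N - 1 - Suc a = n - 1" "?N - 1 - a = n" using 2 n by auto
        then show ?thesis using 2 n a by (simp add: H_def dif_def mir_val L_def Lf_def)
      next
        case 3
        have e: "?N - 1 - a = Suc (?N - 2 - a)" "?N - 1 - Suc a = ?N - 2 - a" using 3 a by auto
        have lt: "Suc (?N - 2 - a) < n" using 3 a by auto
        have h1: "H $$ (a,a) = - L (?N-1-a)" using 3 a lt e by (simp add: H_def mir_val)
        have h2: "H $$ (Suc a, Suc a) = - L (?N-2-a)" using 3 a lt e by (simp add: H_def mir_val)
        have "dif a (Suc a) H = L (?N-2-a) - L (Suc (?N-2-a))" unfolding dif_def h1 h2 e by simp
        also have "\<dots> = t (?N - 2 - a)" unfolding L_def by (rule Lf_step[OF lt])
        finally have "dif a (Suc a) H = t (?N - 2 - a)" .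
        moreover have "P (?N-2-a) (?N-1-a) = P a (Suc a)"
          using inv[of a "Suc a" "?N-2-a" "?N-1-a"] F.refl_step_feq[OF a] a e by (auto simp: stepA_def)
        ultimately show ?thesis using e by (simp add: t_def)
      qed
    qed
    then show "\<exists>H\<in>cartan ?N (formalg ?N (sgn_sp n)). \<forall>a b. stepA ?N a b \<longrightarrow> dif a b H = (if P a b then 0 else 1)"
      using Hc by (intro bexI[of _ H]) (auto simp: stepA_def t_def)
  qed
qed


lemma soB_cls: assumes N: "N = 2*n+1" and n: "n \<ge> 1" shows "cls N (so_alg N) (stepA N)"
proof -
  interpret F: form N "\<lambda>_. 1" 1 by (rule form_so)
  have nd: "N div 2 = n" using N by simp
  have prpI: "prp N (so_alg N) a b" if "a < b" "b < N" "a + b \<noteq> N - 1" for a b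
    using F.prp_gen[OF that] so_eq by simp
  show ?thesis unfolding so_eq
  proof (rule F.cls_form)
    fix a b assume "stepA N a b"
    then have b: "b = Suc a" "Suc a < N" by (auto simp: stepA_def)
    have "a + b \<noteq> N - 1" using b N by presburger
    then show "prp N (formalg N (\<lambda>_. 1)) a b" using prpI[of a b] so_eq b by auto
  next
    fix a b assume p: "prp N (formalg N (\<lambda>_. 1)) a b"
    then have ab: "a < b" "b < N" by (auto simp: prp_def)
    have ne: "a + b \<noteq> N - 1" using F.prp_not p by simp
    show "stepA N a b \<or> (\<exists>c d e f. prp N (formalg N (\<lambda>_. 1)) c d \<and> stepA N e f \<and> d - c < b - a \<and>
            feq N (formalg N (\<lambda>_. 1)) (dif a b) (\<lambda>H. dif c d H + dif e f H))"
    proof (cases "b = Suc a")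
      case True then show ?thesis using ab by (auto simp: stepA_def)
    next
      case False
      show ?thesis
      proof (cases "a + (b - 1) = N - 1")
        case False2: False
        have "a < b - 1" using ab False by auto
        then show ?thesis using ab prpI[of a "b - 1"] so_eq dif_split[of a b _ "b-1"] False2 N
          by (intro disjI2 exI[of _ a] exI[of _ "b - 1"] exI[of _ "b - 1"] exI[of _ b]) (auto simp: feq_def stepA_def)
      next
        case True2: True
        have "Suc a < b" "Suc a + b \<noteq> N - 1" using ab False True2 by auto
        then show ?thesis using ab prpI[of "Suc a" b] so_eq dif_split[of a b _ "Suc a"] N
          by (intro disjI2 exI[of _ "Suc a"] exI[of _ b] exI[of _ a] exI[of _ "Suc a"]) (auto simp: feq_def stepA_def)
      qed
    qed
  next
    fix P :: "nat \<Rightarrow> nat \<Rightarrow> bool"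
    assume inv: "\<And>a b c d. stepA N a b \<Longrightarrow> stepA N c d \<Longrightarrow> feq N (formalg N (\<lambda>_. 1)) (dif a b) (dif c d)
        \<Longrightarrow> P a b = P c d"
    define t where "t k = (if P k (Suc k) then 0 else 1 :: complex)" for k
    define L where "L = Lf n (t (n-1)) t"
    define H where "H = mir N L"
    have Hc: "H \<in> cartan N (formalg N (\<lambda>_. 1))" unfolding H_def by (rule F.mir_cartan)
    have Ln: "L (n-1) = t (n-1)" by (simp add: L_def Lf_def)
    have "dif a (Suc a) H = t a" if a: "Suc a < N" for a
    proof -
      consider "Suc a < n" | "a = n - 1" | "a = n" | "a \<ge> Suc n" by linarith
      then show ?thesis
      proof cases
        case 1 then show ?thesis using a Lf_step[OF 1] nd by (simp add: H_def dif_def mir_val L_def)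
      next
        case 2
        have h1: "H $$ (a,a) = L (n-1)" using 2 n a nd by (simp add: H_def mir_val)
        have h2: "H $$ (Suc a, Suc a) = 0" using 2 n a nd N by (simp add: H_def mir_val)
        show ?thesis unfolding dif_def h1 h2 Ln using 2 by simp
      next
        case 3
        have h1: "H $$ (a,a) = 0" using 3 a nd N by (simp add: H_def mir_val)
        have e: "N - 1 - Suc a = n - 1" using 3 N by simp
        have h2: "H $$ (Suc a, Suc a) = - L (n-1)" using 3 a nd N e by (simp add: H_def mir_val)
        have "dif a (Suc a) H = t (n - 1)" unfolding dif_def h1 h2 Ln by simp
        moreover have "P (n-1) n = P a (Suc a)"
          using inv[of a "Suc a" "N-2-a" "N-1-a"] F.refl_step_feq[OF a] a 3 N n by (auto simp: stepA_def)
        moreover have "Suc (n-1) = n" using n by simp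
        ultimately show ?thesis unfolding t_def using 3 by (metis)
      next
        case 4
        have e: "N - 1 - a = Suc (N - 2 - a)" "N - 1 - Suc a = N - 2 - a" using 4 a by auto
        have lt: "Suc (N - 2 - a) < n" using 4 a N by auto
        have h1: "H $$ (a,a) = - L (N-1-a)" using 4 a lt e nd by (simp add: H_def mir_val)
        have h2: "H $$ (Suc a, Suc a) = - L (N-2-a)" using 4 a lt e nd by (simp add: H_def mir_val)
        have "dif a (Suc a) H = L (N-2-a) - L (Suc (N-2-a))" unfolding dif_def h1 h2 e by simp
        also have "\<dots> = t (N - 2 - a)" unfolding L_def by (rule Lf_step[OF lt])
        finally have "dif a (Suc a) H = t (N - 2 - a)" .
        moreover have "P (N-2-a) (N-1-a) = P a (Suc a)"
          using inv[of a "Suc a" "N-2-a" "N-1-a"] F.refl_step_feq[OF a] a e by (auto simp: stepA_def)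
        ultimately show ?thesis using e by (simp add: t_def)
      qed
    qed
    then show "\<exists>H\<in>cartan N (formalg N (\<lambda>_. 1)). \<forall>a b. stepA N a b \<longrightarrow> dif a b H = (if P a b then 0 else 1)"
      using Hc by (intro bexI[of _ H]) (auto simp: stepA_def t_def)
  qed
qed


definition stepD :: "nat \<Rightarrow> nat \<Rightarrow> nat \<Rightarrow> bool" where
  "stepD N a b \<longleftrightarrow> (b = Suc a \<and> Suc a < N \<and> a + b \<noteq> N - 1) \<or> (a + 2 = N div 2 \<and> b = N div 2)
      \<or> (Suc a = N div 2 \<and> b = Suc (N div 2))"

lemma soD_cls: assumes N: "N = 2*n" and n: "n \<ge> 2" shows "cls N (so_alg N) (stepD N)"
proof -
  interpret F: form N "\<lambda>_. 1" 1 by (rule form_so)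
  have nd: "N div 2 = n" using N by simp
  have prpI: "prp N (so_alg N) a b" if "a < b" "b < N" "a + b \<noteq> N - 1" for a b
    using F.prp_gen[OF that] so_eq by simp
  show ?thesis unfolding so_eq
  proof (rule F.cls_form)
    fix a b assume "stepD N a b"
    then have "a < b" "b < N" "a + b \<noteq> N - 1" using N n by (auto simp: stepD_def)
    then show "prp N (formalg N (\<lambda>_. 1)) a b" using prpI[of a b] so_eq by auto
  next
    fix a b assume p: "prp N (formalg N (\<lambda>_. 1)) a b"
    then have ab: "a < b" "b < N" by (auto simp: prp_def)
    have ne: "a + b \<noteq> N - 1" using F.prp_not p by simp
    show "stepD N a b \<or> (\<exists>c d e f. prp N (formalg N (\<lambda>_. 1)) c d \<and> stepD N e f \<and> d - c < b - a \<and>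
            feq N (formalg N (\<lambda>_. 1)) (dif a b) (\<lambda>H. dif c d H + dif e f H))"
    proof (cases "stepD N a b")
      case True then show ?thesis by simp
    next
      case False
      then have b2: "Suc a < b" "\<not> (a + 2 = n \<and> b = n)" "\<not> (Suc a = n \<and> b = Suc n)"
        using ab ne nd unfolding stepD_def by auto
      show ?thesis
      proof (cases "b \<noteq> n \<and> a + b \<noteq> N")
        case True
        have "a < b - 1" "a + (b - 1) \<noteq> N - 1" "stepD N (b-1) b" using ab True b2 N unfolding stepD_def by auto
        then show ?thesis using ab prpI[of a "b - 1"] so_eq dif_split[of a b _ "b-1"]
          by (intro disjI2 exI[of _ a] exI[of _ "b - 1"] exI[of _ "b - 1"] exI[of _ b]) (auto simp: feq_def)
      next
        case False
        have bn: "b = n \<or> a + b = N" using False by auto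
        have an: "a \<noteq> n - 1"
        proof
          assume "a = n - 1"
          then show False using bn b2 ab N n by auto
        qed
        have s1: "Suc a + b \<noteq> N - 1"
        proof
          assume h: "Suc a + b = N - 1"
          show False using bn
          proof
            assume "b = n" then show False using h b2(2) N by auto
          next
            assume "a + b = N" then show False using h N n by auto
          qed
        qed
        have "Suc a < N" "a + Suc a \<noteq> N - 1" using ab b2 an N n by auto
        then have "Suc a < b" "Suc a + b \<noteq> N - 1" "stepD N a (Suc a)" using b2 s1 unfolding stepD_def by auto
        then show ?thesis using ab prpI[of "Suc a" b] so_eq dif_split[of a b _ "Suc a"]
          by (intro disjI2 exI[of _ "Suc a"] exI[of _ b] exI[of _ a] exI[of _ "Suc a"]) (auto simp: feq_def)
      qed
    qed
  next
    fix P :: "nat \<Rightarrow> nat \<Rightarrow> bool"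
    assume inv: "\<And>a b c d. stepD N a b \<Longrightarrow> stepD N c d \<Longrightarrow> feq N (formalg N (\<lambda>_. 1)) (dif a b) (dif c d)
        \<Longrightarrow> P a b = P c d"
    define t where "t k = (if P k (Suc k) then 0 else 1 :: complex)" for k
    define tf where "tf = (if P (n-2) n then 0 else 1 :: complex)"
    define B where "B = (tf - t (n-2)) / 2"
    define L where "L = Lf n B t"
    define H where "H = mir N L"
    have Hc: "H \<in> cartan N (formalg N (\<lambda>_. 1))" unfolding H_def by (rule F.mir_cartan)
    have Ln: "L (n-1) = B" by (simp add: L_def Lf_def)
    have Ln2: "L (n-2) = B + t (n-2)"
    proof -
      have "Suc (n-2) < n" using n by simp
      from Lf_step[OF this, of B t] have "L (n-2) - L (n-1) = t (n-2)" using n unfolding L_def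
        by (simp add: Suc_diff_Suc numeral_2_eq_2)
      then show ?thesis using Ln by (simp add: algebra_simps)
    qed
    have reg: "dif a (Suc a) H = t a" if a: "Suc a < N" "a \<noteq> n - 1" for a
    proof -
      consider "Suc a < n" | "a \<ge> n" using a n by linarith
      then show ?thesis
      proof cases
        case 1 then show ?thesis using a Lf_step[OF 1] nd by (simp add: H_def dif_def mir_val L_def)
      next
        case 2
        have e: "N - 1 - a = Suc (N - 2 - a)" "N - 1 - Suc a = N - 2 - a" using 2 a by auto
        have lt: "Suc (N - 2 - a) < n" using 2 a N by auto
        have h1: "H $$ (a,a) = - L (N-1-a)" using 2 a lt e nd by (simp add: H_def mir_val)
        have h2: "H $$ (Suc a, Suc a) = - L (N-2-a)" using 2 a lt e nd by (simp add: H_def mir_val)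
        have "dif a (Suc a) H = L (N-2-a) - L (Suc (N-2-a))" unfolding dif_def h1 h2 e by simp
        also have "\<dots> = t (N - 2 - a)" unfolding L_def by (rule Lf_step[OF lt])
        finally have "dif a (Suc a) H = t (N - 2 - a)" .
        moreover have "stepD N a (Suc a)" "stepD N (N-2-a) (N-1-a)" using a 2 N e unfolding stepD_def by auto
        then have "P (N-2-a) (N-1-a) = P a (Suc a)"
          using inv[of a "Suc a" "N-2-a" "N-1-a"] F.refl_step_feq[OF a(1)] by auto
        ultimately show ?thesis using e by (simp add: t_def)
      qed
    qed
    have f1: "dif (n-2) n H = tf"
    proof -
      have h1: "H $$ (n-2, n-2) = L (n-2)" using n nd N by (simp add: H_def mir_val)
      have "N - 1 - n = n - 1" using N by simp
      then have h2: "H $$ (n, n) = - L (n-1)" using n nd N by (simp add: H_def mir_val)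
      show ?thesis unfolding dif_def h1 h2 Ln Ln2 B_def by (simp add: field_simps)
    qed
    have f2: "dif (n-1) (Suc n) H = tf"
    proof -
      have h1: "H $$ (n-1, n-1) = L (n-1)" using n nd N by (simp add: H_def mir_val)
      have "N - 1 - Suc n = n - 2" using N n by simp
      then have h2: "H $$ (Suc n, Suc n) = - L (n-2)" using n nd N by (simp add: H_def mir_val)
      show ?thesis unfolding dif_def h1 h2 Ln Ln2 B_def by (simp add: field_simps)
    qed
    have Pf: "P (n-1) (Suc n) = P (n-2) n"
    proof -
      have "stepD N (n-1) (Suc n)" "stepD N (n-2) n" using n nd unfolding stepD_def by auto
      moreover have "feq N (formalg N (\<lambda>_. 1)) (dif (n-1) (Suc n)) (dif (n-2) n)"
      proof -
        have "dif (n-1) (Suc n) K = dif (n-2) n K" if K: "K \<in> cartan N (formalg N (\<lambda>_. 1))" for K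
        proof -
          have a1: "K $$ (N-1-(n-2), N-1-(n-2)) = - K $$ (n-2, n-2)" by (rule F.cartan_refl[OF K]) (use n N in simp)
          have a2: "K $$ (N-1-(n-1), N-1-(n-1)) = - K $$ (n-1, n-1)" by (rule F.cartan_refl[OF K]) (use n N in simp)
          have e1: "N-1-(n-2) = Suc n" "N-1-(n-1) = n" using n N by auto
          show ?thesis using a1[unfolded e1(1)] a2[unfolded e1(2)] by (simp add: dif_def)
        qed
        then show ?thesis by (auto simp: feq_def)
      qed
      ultimately show ?thesis using inv by blast
    qed
    have "\<forall>a b. stepD N a b \<longrightarrow> dif a b H = (if P a b then 0 else 1)"
    proof (intro allI impI)
      fix a b assume st: "stepD N a b"
      consider "b = Suc a" "Suc a < N" "a + b \<noteq> N - 1" | "a + 2 = n" "b = n" | "Suc a = n" "b = Suc n"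
        using st nd unfolding stepD_def by auto
      then show "dif a b H = (if P a b then 0 else 1)"
      proof cases
        case 1
        have "a \<noteq> n - 1" using 1 N n by auto
        then show ?thesis using reg 1 by (simp add: t_def)
      next
        case 2
        have "a = n - 2" using 2 by simp
        then show ?thesis using f1 2 by (simp add: tf_def)
      next
        case 3
        have "a = n - 1" using 3 by simp
        then show ?thesis using f2 Pf 3 by (simp add: tf_def)
      qed
    qed
    then show "\<exists>H\<in>cartan N (formalg N (\<lambda>_. 1)). \<forall>a b. stepD N a b \<longrightarrow> dif a b H = (if P a b then 0 else 1)"
      using Hc by blast
  qed
qed


lemma generic:
  assumes C: "cls N g step"
    and R': "closed_root_subset N g R'"
    and simple: "\<And>\<alpha>. simple_roots N g (\<lambda>\<beta>. \<beta> \<in> R' \<and> pos_root N g \<beta>) \<alpha>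
                     \<Longrightarrow> simple_roots N g (pos_root N g) \<alpha>"
    and rep: "current_rep N g m \<rho>"
    and w: "w \<in> weight_space N g m \<rho> lam"
    and cyc: "cyclic_sub m \<rho> (nneg N g) w = carrier_vec m"
  shows "cyclic_sub m \<rho> (levi N g R') w
           = vec_sum_span m (\<Union>\<mu> \<in> {\<mu>. Qplus N g R' \<mu>}. weight_space N g m \<rho> (\<lambda>H. lam H - \<mu> H))"
proof -
  have "clsrep N g step R' m \<rho> w lam"
    unfolding clsrep_def clsR_def clsrep_axioms_def clsR_axioms_def using assms by auto
  then show ?thesis by (rule clsrep.main_eq)
qed

theorem mainTheorem6:
  fixes N m :: nat
    and g :: "complex mat set"
    and R' :: "(complex mat \<Rightarrow> complex) set"
    and \<rho> :: "nat \<Rightarrow> complex mat \<Rightarrow> complex mat"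
    and w :: "complex vec"
    and lam :: "complex mat \<Rightarrow> complex"
  assumes g: "classical_simple N g"
    and R': "closed_root_subset N g R'"
    and simple: "\<And>\<alpha>. simple_roots N g (\<lambda>\<beta>. \<beta> \<in> R' \<and> pos_root N g \<beta>) \<alpha>
                     \<Longrightarrow> simple_roots N g (pos_root N g) \<alpha>"
    and rep: "current_rep N g m \<rho>"
    and w: "w \<in> weight_space N g m \<rho> lam" "w \<noteq> 0\<^sub>v m"
    and cyc: "cyclic_sub m \<rho> (nneg N g) w = carrier_vec m"
  shows "cyclic_sub m \<rho> (levi N g R') w
           = vec_sum_span m (\<Union>\<mu> \<in> {\<mu>. Qplus N g R' \<mu>}. weight_space N g m \<rho> (\<lambda>H. lam H - \<mu> H))"
proof -
  obtain step where "cls N g step"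
  proof -
    consider "N \<ge> 2" "g = sl_alg N" | "N = 3 \<or> N \<ge> 5" "g = so_alg N" | n where "n \<ge> 1" "N = 2*n" "g = sp_alg n"
      using g unfolding classical_simple_def by blast
    then show ?thesis
    proof cases
      case 1 then show ?thesis using sl_cls that by blast
    next
      case 2
      show ?thesis
      proof (cases "even N")
        case True
        then obtain n where n: "N = 2*n" by blast
        then have "n \<ge> 2" using 2 by auto
        then show ?thesis using soD_cls[OF n] 2 that by blast
      next
        case False
        then obtain n where n: "N = 2*n+1" using oddE by blast
        then have "n \<ge> 1" using 2 by auto
        then show ?thesis using soB_cls[OF n] 2 that by blast
      qed
    next
      case 3 then show ?thesis using sp_cls that by blast
    qed
  qed
  then show ?thesis using generic R' simple rep w(1) cyc by blast
qed


end
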